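(* Let $P$ be a finite geometric lattice of rank $n$ with atom ordering $a_1<\dots<a_m$ and its associated minimal labeling, and let $S=\{s_1<\dots<s_k\}\subseteq\{1,\dots,n-1\}$. Consider any shelling of the order complex of $P^S$ obtained as a linear extension of the order on maximal chains $\gamma$ of $P^S$ given by comparing, lexicographically, the label sequences of $f_{first}(\gamma)$. Then the homology facets of this shelling are exactly those maximal chains $\gamma$ of $P^S$ for which $f_{rib}(f_{first}(\gamma))$ is a standard filling of $\mathrm{Rib}(s_1,s_2-s_1,\dots,n-s_k)$ whose reading word is an $\mathrm{NBC}^+$ basis of $P$.
   Context: The minimal labeling labels each cover relation $u\prec v$ by the atom $\min(A(v)\setminus A(u))$, where $A(x)$ is the set of atoms below $x$; the label sequence of a maximal chain $\hat0\prec u_1\prec\dots\prec\hat1$ is the sequence of its edge labels. $P^S$ is the subposet of elements with ranks in $S$. For a maximal chain $\gamma$ of $P^S$, $f_{first}(\gamma)$ is the maximal chain of $P$ containing $\gamma$ whose label sequence is lexicographically smallest. For a maximal chain $M$ of $P$, $f_{rib}(M)$ is the filling of $\mathrm{Rib}(s_1,\dots,n-s_k)$ whose reading word is the label sequence of $M$. A shelling is an order $F_1,F_2,\dots$ of facets such that each $\overline{F_j}\cap\bigcup_{i<j}\overline{F_i}$ is pure of codimension one in $\overline{F_j}$; a homology facet is one with $\overline{F_j}\cap\bigcup_{i<j}\overline{F_i}=\partial F_j$. $\mathrm{Rib}(r_1,\dots,r_p)$: ribbon with rows of lengths $r_1,\dots,r_p$ bottom to top, each row starting directly above the last box of the row below;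 reading word: left to right, bottom row to top; standard: entries increase in atom order left to right along rows and top to bottom down columns. NBC independent set: atoms $\{b_1,\dots,b_l\}$ whose join has rank $l$ and such that every atom outside the set below the join is later in the order than some $b_j$. $\mathrm{NBC}^+$ basis: ordered NBC independent set $(b_1,\dots,b_n)$ with $b_j=\min(A(b_1\vee\dots\vee b_j)\setminus A(b_1\vee\dots\vee b_{j-1}))$ for all $j$. *)

theory Defs
  imports Main
begin

text \<open>The finite lattice P is modelled as a finite type 'a with a complete lattice
structure (every finite lattice is complete); bottom and top are bot and top.
The atom ordering a_1 < ... < a_m is given by a weight w, injective on atoms:
a_i < a_j iff w a_i < w a_j.\<close>

definition cov :: "'a::complete_lattice \<Rightarrow> 'a \<Rightarrow> bool" where
  "cov x y \<longleftrightarrow> x < y \<and> \<not> (\<exists>z. x < z \<and> z < y)"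

definition atoms :: "'a::complete_lattice set" where
  "atoms = {a. cov bot a}"

definition atoms_below :: "'a::complete_lattice \<Rightarrow> 'a set" where
  "atoms_below x = {a \<in> atoms. a \<le> x}"

definition rnk :: "'a::{finite,complete_lattice} \<Rightarrow> nat" where
  "rnk x = Max {card C | C. C \<subseteq> {y. y \<le> x} \<and> Complete_Partial_Order.chain (\<le>) C} - 1"

definition atomistic :: "'a::complete_lattice itself \<Rightarrow> bool" where
  "atomistic _ \<longleftrightarrow> (\<forall>x::'a. x = Sup (atoms_below x))"

definition semimodular :: "'a::complete_lattice itself \<Rightarrow> bool" where
  "semimodular _ \<longleftrightarrow> (\<forall>x y::'a. cov (inf x y) x \<longrightarrow> cov y (sup x y))"

definition geometric_lattice :: "'a::{finite,complete_lattice} itself \<Rightarrow> bool" where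
  "geometric_lattice T \<longleftrightarrow> atomistic T \<and> semimodular T"

definition amin :: "('a \<Rightarrow> nat) \<Rightarrow> 'a set \<Rightarrow> 'a" where
  "amin w X = (THE a. a \<in> X \<and> (\<forall>b\<in>X. w a \<le> w b))"

definition lab :: "('a::complete_lattice \<Rightarrow> nat) \<Rightarrow> 'a \<Rightarrow> 'a \<Rightarrow> 'a" where
  "lab w u v = amin w (atoms_below v - atoms_below u)"

definition maxchain :: "'a::complete_lattice list \<Rightarrow> bool" where
  "maxchain c \<longleftrightarrow> c \<noteq> [] \<and> hd c = bot \<and> last c = top \<and>
     (\<forall>i. Suc i < length c \<longrightarrow> cov (c ! i) (c ! Suc i))"

definition labs :: "('a::complete_lattice \<Rightarrow> nat) \<Rightarrow> 'a list \<Rightarrow> 'a list" where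
  "labs w c = map (\<lambda>i. lab w (c ! i) (c ! Suc i)) [0..<length c - 1]"

definition lexless :: "('a \<Rightarrow> nat) \<Rightarrow> 'a list \<Rightarrow> 'a list \<Rightarrow> bool" where
  "lexless w xs ys \<longleftrightarrow> (map w xs, map w ys) \<in> lexord {(a, b). a < b}"

definition PS :: "nat set \<Rightarrow> 'a::{finite,complete_lattice} set" where
  "PS S = {x. rnk x \<in> S}"

text \<open>Maximal chains of P^S (= facets of the order complex of P^S).\<close>
definition maxchainsS :: "nat set \<Rightarrow> 'a::{finite,complete_lattice} set set" where
  "maxchainsS S = {C. C \<subseteq> PS S \<and> Complete_Partial_Order.chain (\<le>) C \<and>
     (\<forall>D. D \<subseteq> PS S \<and> Complete_Partial_Order.chain (\<le>) D \<and> C \<subseteq> D \<longrightarrow> D = C)}"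

definition ffirst :: "('a::complete_lattice \<Rightarrow> nat) \<Rightarrow> 'a set \<Rightarrow> 'a list" where
  "ffirst w \<gamma> = (THE M. maxchain M \<and> \<gamma> \<subseteq> set M \<and>
     (\<forall>M'. maxchain M' \<and> \<gamma> \<subseteq> set M' \<longrightarrow>
        labs w M = labs w M' \<or> lexless w (labs w M) (labs w M')))"

text \<open>Shellings of a complex given by a list of facets (faces are sets; closure of F is Pow F).\<close>
definition past :: "'a set list \<Rightarrow> nat \<Rightarrow> 'a set set" where
  "past Fs j = Pow (Fs ! j) \<inter> (\<Union>i<j. Pow (Fs ! i))"

definition pure_codim1 :: "'a set set \<Rightarrow> 'a set \<Rightarrow> bool" where
  "pure_codim1 K F \<longleftrightarrow> (\<forall>G\<in>K. (\<forall>H\<in>K. G \<subseteq> H \<longrightarrow> H = G) \<longrightarrow> card G + 1 = card F)"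

definition is_shelling :: "'a set list \<Rightarrow> bool" where
  "is_shelling Fs \<longleftrightarrow> (\<forall>j<length Fs. 0 < j \<longrightarrow> pure_codim1 (past Fs j) (Fs ! j))"

definition homology_facet :: "'a set list \<Rightarrow> nat \<Rightarrow> bool" where
  "homology_facet Fs j \<longleftrightarrow> past Fs j = {G. G \<subset> Fs ! j}"

text \<open>Ribbons. Row lengths rs = [r_1,...,r_p], rows indexed 0.. from bottom to top;
boxes are (row, column); row i starts at column rib_start rs i, directly above
the last box of row i-1.\<close>
definition rib_start :: "nat list \<Rightarrow> nat \<Rightarrow> nat" where
  "rib_start rs i = (\<Sum>j<i. rs ! j - 1)"

definition rib_boxes :: "nat list \<Rightarrow> (nat \<times> nat) set" where
  "rib_boxes rs = {(i, rib_start rs i + t) | i t. i < length rs \<and> t < rs ! i}"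

definition reading_word :: "nat list \<Rightarrow> (nat \<times> nat \<Rightarrow> 'a) \<Rightarrow> 'a list" where
  "reading_word rs F =
     concat (map (\<lambda>i. map (\<lambda>t. F (i, rib_start rs i + t)) [0..<rs ! i]) [0..<length rs])"

definition standard :: "('a \<Rightarrow> nat) \<Rightarrow> nat list \<Rightarrow> (nat \<times> nat \<Rightarrow> 'a) \<Rightarrow> bool" where
  "standard w rs F \<longleftrightarrow>
     (\<forall>i c. (i, c) \<in> rib_boxes rs \<and> (i, Suc c) \<in> rib_boxes rs \<longrightarrow> w (F (i, c)) < w (F (i, Suc c))) \<and>
     (\<forall>i c. (i, c) \<in> rib_boxes rs \<and> (Suc i, c) \<in> rib_boxes rs \<longrightarrow> w (F (Suc i, c)) < w (F (i, c)))"

definition ribrows :: "nat \<Rightarrow> nat set \<Rightarrow> nat list" where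
  "ribrows n S = (let s = sorted_list_of_set S in map2 (-) (s @ [n]) (0 # s))"

definition frib :: "('a::complete_lattice \<Rightarrow> nat) \<Rightarrow> nat list \<Rightarrow> 'a list \<Rightarrow> nat \<times> nat \<Rightarrow> 'a" where
  "frib w rs M = (\<lambda>(i, c). labs w M ! (sum_list (take i rs) + (c - rib_start rs i)))"

definition nbc_indep :: "('a::{finite,complete_lattice} \<Rightarrow> nat) \<Rightarrow> 'a set \<Rightarrow> bool" where
  "nbc_indep w B \<longleftrightarrow> B \<subseteq> atoms \<and> rnk (Sup B) = card B \<and>
     (\<forall>a \<in> atoms_below (Sup B) - B. \<exists>b\<in>B. w b < w a)"

definition nbc_plus :: "('a::{finite,complete_lattice} \<Rightarrow> nat) \<Rightarrow> nat \<Rightarrow> 'a list \<Rightarrow> bool" where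
  "nbc_plus w n bs \<longleftrightarrow> length bs = n \<and> distinct bs \<and> nbc_indep w (set bs) \<and>
     (\<forall>j<n. bs ! j = amin w (atoms_below (Sup (set (take (Suc j) bs))) - atoms_below (Sup (set (take j bs)))))"

end

theory Submission
  imports Defs
begin


lemma cov_le: "cov x y \<Longrightarrow> x < y" by (simp add: cov_def)

lemma cov_mid: "cov x y \<Longrightarrow> x \<le> z \<Longrightarrow> z \<le> y \<Longrightarrow> z = x \<or> z = y"
  unfolding cov_def by (metis order.not_eq_order_implies_strict)

lemma atomsD: "a \<in> atoms \<Longrightarrow> cov bot a" by (simp add: atoms_def)

lemma atom_below_bot: "a \<in> atoms \<Longrightarrow> z \<le> a \<Longrightarrow> z \<noteq> a \<Longrightarrow> z = bot"
  using cov_mid[OF atomsD[of a], of z] by auto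

lemma atom_not_bot: "a \<in> atoms \<Longrightarrow> \<not> a \<le> bot"
  using atomsD[of a] cov_le[of bot a] by (simp add: bot_unique)

locale geo =
  fixes w :: "'a::{finite,complete_lattice} \<Rightarrow> nat"
  assumes geom: "geometric_lattice TYPE('a)"
    and winj: "inj_on w atoms"
begin

lemma atomistic: "(x::'a) = Sup (atoms_below x)"
  using geom unfolding geometric_lattice_def atomistic_def by blast

lemma semimod: "cov (inf x y) x \<Longrightarrow> cov (y::'a) (sup x y)"
  using geom unfolding geometric_lattice_def semimodular_def by blast

lemma le_iff_atoms: "(x::'a) \<le> y \<longleftrightarrow> atoms_below x \<subseteq> atoms_below y"
proof
  assume "x \<le> y" thus "atoms_below x \<subseteq> atoms_below y"
    unfolding atoms_below_def by auto
next
  assume "atoms_below x \<subseteq> atoms_below y"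
  hence "Sup (atoms_below x) \<le> Sup (atoms_below y)" by (rule Sup_subset_mono)
  thus "x \<le> y" using atomistic[of x] atomistic[of y] by simp
qed

lemma less_atom: "(x::'a) < y \<Longrightarrow> \<exists>a\<in>atoms_below y. a \<notin> atoms_below x"
proof -
  assume "x < y"
  hence "\<not> atoms_below y \<subseteq> atoms_below x" using le_iff_atoms[of y x] by (auto simp: less_le_not_le)
  thus ?thesis by blast
qed

lemma atom_cov: "a \<in> atoms \<Longrightarrow> \<not> a \<le> x \<Longrightarrow> cov (x::'a) (sup x a)"
proof -
  assume a: "a \<in> atoms" "\<not> a \<le> x"
  have "inf a x \<le> a" by simp
  moreover have "inf a x \<noteq> a" using a(2) by (metis inf.cobounded2)
  ultimately have "inf a x = bot" using atom_below_bot a(1) by blast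
  hence "cov (inf a x) a" using atomsD a(1) by simp
  hence "cov x (sup a x)" by (rule semimod)
  thus ?thesis by (simp add: sup_commute)
qed

lemma cov_sup_atom: "cov (x::'a) y \<Longrightarrow> a \<le> y \<Longrightarrow> \<not> a \<le> x \<Longrightarrow> sup x a = y"
proof -
  assume h: "cov x y" "a \<le> y" "\<not> a \<le> x"
  have "sup x a \<le> y" using h cov_le[OF h(1)] by simp
  moreover have "sup x a \<noteq> x" using h(3) by (simp add: sup.absorb_iff1)
  ultimately show ?thesis using cov_mid[OF h(1), of "sup x a"] by simp
qed

end

lemma finite_maximal_less: "(y::'a::{finite,order}) < x \<Longrightarrow> \<exists>z. y \<le> z \<and> z < x \<and> (\<forall>u. z < u \<longrightarrow> \<not> u < x)"
proof -
  assume yx: "y < x"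
  have "finite {z. y \<le> z \<and> z < x}" by simp
  from finite_has_maximal2[OF this, of y] yx
  obtain m where m: "m \<in> {z. y \<le> z \<and> z < x}" "\<forall>b\<in>{z. y \<le> z \<and> z < x}. m \<le> b \<longrightarrow> m = b"
    by auto
  show ?thesis
  proof (intro exI[of _ m] conjI allI impI)
    show "y \<le> m" "m < x" using m by auto
    fix u assume mu: "m < u" show "\<not> u < x"
    proof
      assume "u < x"
      moreover have "y \<le> u" using m(1) mu order_trans[of y m u] by simp
      ultimately have "u \<in> {z. y \<le> z \<and> z < x}" by simp
      hence "m = u" using m(2) mu by simp
      thus False using mu by simp
    qed
  qed
qed

lemma exists_cov_below: "(y::'a::{finite,complete_lattice}) < x \<Longrightarrow> \<exists>z. y \<le> z \<and> cov z x"
proof -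
  assume "y < x"
  then obtain z where z: "y \<le> z" "z < x" "\<forall>u. z < u \<longrightarrow> \<not> u < x"
    using finite_maximal_less by blast
  have "cov z x" unfolding cov_def using z(2,3) by simp
  thus ?thesis using z(1) by blast
qed

lemma amin_eq:
  assumes "a \<in> X" "\<forall>b\<in>X. w a \<le> w b" "inj_on w X"
  shows "amin w X = a"
  unfolding amin_def
proof (rule the_equality)
  show "a \<in> X \<and> (\<forall>b\<in>X. w a \<le> w b)" using assms by blast
  fix b assume "b \<in> X \<and> (\<forall>c\<in>X. w b \<le> w c)"
  hence "w a = w b" "b \<in> X" using assms by (auto intro: antisym)
  thus "b = a" using assms(3) assms(1) inj_onD by metis
qed

lemma amin_prop:
  assumes "finite X" "X \<noteq> {}" "inj_on w X"
  shows "amin w X \<in> X \<and> (\<forall>b\<in>X. w (amin w X) \<le> w b)"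
proof -
  have "Min (w ` X) \<in> w ` X" using assms by simp
  then obtain a where a: "a \<in> X" "w a = Min (w ` X)" by auto
  have a2: "\<forall>b\<in>X. w a \<le> w b" using a assms by simp
  have "amin w X = a" by (rule amin_eq[OF a(1) a2 assms(3)])
  thus ?thesis using a a2 by simp
qed



definition mc :: "'a::complete_lattice \<Rightarrow> 'a \<Rightarrow> 'a list \<Rightarrow> bool" where
  "mc y x c \<longleftrightarrow> c \<noteq> [] \<and> hd c = y \<and> last c = x \<and> (\<forall>i. Suc i < length c \<longrightarrow> cov (c!i) (c!Suc i))"

lemma maxchain_mc: "maxchain c = mc bot top c"
  by (simp add: maxchain_def mc_def)

lemma mc_nth0: "mc y x c \<Longrightarrow> c!0 = y"
  by (cases c) (auto simp: mc_def)

lemma mc_last: "mc y x c \<Longrightarrow> c!(length c - 1) = x"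
  by (auto simp: mc_def last_conv_nth)

lemma mc_ne: "mc y x c \<Longrightarrow> 0 < length c"
  by (simp add: mc_def)

lemma mc_cov: "mc y x c \<Longrightarrow> Suc i < length c \<Longrightarrow> cov (c!i) (c!Suc i)"
  by (simp add: mc_def)

lemma mc_less: "mc y x c \<Longrightarrow> i < j \<Longrightarrow> j < length c \<Longrightarrow> c!i < c!j"
proof (induction j)
  case 0 then show ?case by simp
next
  case (Suc j)
  have c: "c!j < c!Suc j" using mc_cov[OF Suc.prems(1) Suc.prems(3)] cov_le by blast
  show ?case
  proof (cases "i = j")
    case True then show ?thesis using c by simp
  next
    case False
    hence "c!i < c!j" using Suc by simp
    thus ?thesis using c by (rule less_trans)
  qed
qed

lemma mc_le: "mc y x c \<Longrightarrow> i \<le> j \<Longrightarrow> j < length c \<Longrightarrow> c!i \<le> c!j"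
  using mc_less[of y x c i j] by (cases "i = j") auto

lemma mc_le_nth: "mc y x c \<Longrightarrow> i < length c \<Longrightarrow> y \<le> c!i \<and> c!i \<le> x"
  using mc_le[of y x c 0 i] mc_le[of y x c i "length c - 1"] mc_nth0[of y x c] mc_last[of y x c]
  by simp

lemma mc_yx: "mc y x c \<Longrightarrow> y \<le> x"
  using mc_le[of y x c 0 "length c - 1"] mc_nth0[of y x c] mc_last[of y x c] mc_ne[of y x c]
  by simp

lemma mc_distinct: "mc y x c \<Longrightarrow> distinct c"
  unfolding distinct_conv_nth
proof (intro allI impI)
  fix i j assume h: "mc y x c" "i < length c" "j < length c" "i \<noteq> j"
  show "c!i \<noteq> c!j"
  proof (cases "i < j")
    case True then show ?thesis using mc_less[OF h(1) True h(3)] by simp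
  next
    case False then have "j < i" using h(4) by simp
    then show ?thesis using mc_less[OF h(1) _ h(2), of j] by simp
  qed
qed

lemma mc_single: "mc y x [z] \<longleftrightarrow> y = z \<and> x = z"
  by (auto simp: mc_def)

lemma mc_Cons: "cov y u \<Longrightarrow> mc u x c \<Longrightarrow> mc y x (y # c)"
  unfolding mc_def
proof (intro conjI allI impI)
  fix i assume h: "cov y u" "c \<noteq> [] \<and> hd c = u \<and> last c = x \<and> (\<forall>i. Suc i < length c \<longrightarrow> cov (c ! i) (c ! Suc i))"
    "Suc i < length (y # c)"
  show "cov ((y # c) ! i) ((y # c) ! Suc i)"
  proof (cases i)
    case 0 then show ?thesis using h by (cases c) auto
  next
    case (Suc k) then show ?thesis using h by simp
  qed
qed (auto)

lemma mc_tl: "mc y x c \<Longrightarrow> 2 \<le> length c \<Longrightarrow> mc (c!1) x (tl c) \<and> cov y (c!1)"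
proof -
  assume h: "mc y x c" "2 \<le> length c"
  then obtain a c' where c: "c = a # c'" by (cases c) (auto simp: mc_def)
  have "c' \<noteq> []" using h(2) c by auto
  have "hd c' = c!1" using c \<open>c' \<noteq> []\<close> by (cases c') auto
  moreover have "last c' = x" using h(1) c \<open>c' \<noteq> []\<close> unfolding mc_def by simp
  moreover have "\<forall>i. Suc i < length c' \<longrightarrow> cov (c'!i) (c'!Suc i)"
  proof (intro allI impI)
    fix i assume "Suc i < length c'"
    hence "Suc (Suc i) < length c" using c by simp
    from mc_cov[OF h(1) this] show "cov (c'!i) (c'!Suc i)" using c by simp
  qed
  ultimately have "mc (c!1) x (tl c)" using c \<open>c' \<noteq> []\<close> unfolding mc_def by simp
  moreover have "cov y (c!1)" using mc_cov[OF h(1), of 0] h(2) mc_nth0[OF h(1)] by simp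
  ultimately show ?thesis by simp
qed

lemma mc_append: "mc y z c \<Longrightarrow> mc z x d \<Longrightarrow> mc y x (c @ tl d)"
proof (induction c arbitrary: y)
  case Nil then show ?case by (simp add: mc_def)
next
  case (Cons a c)
  show ?case
  proof (cases "c = []")
    case True
    hence "a = y" "a = z" using Cons.prems(1) by (auto simp: mc_single)
    moreover have "d = hd d # tl d" using Cons.prems(2) by (cases d) (auto simp: mc_def)
    ultimately show ?thesis using True Cons.prems(2) by (simp add: mc_def)
  next
    case False
    hence "2 \<le> length (a # c)" by (cases c) auto
    from mc_tl[OF Cons.prems(1) this] have "mc (c!0) z c" "cov y (c!0)" by simp_all
    from Cons.IH[OF this(1) Cons.prems(2)] have "mc (c ! 0) x (c @ tl d)" .
    from mc_Cons[OF \<open>cov y (c!0)\<close> this] have "mc y x (y # c @ tl d)" .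
    moreover have "a = y" using Cons.prems(1) by (simp add: mc_def)
    ultimately show ?thesis by simp
  qed
qed

lemma mc_append_len: "mc y z c \<Longrightarrow> mc z x d \<Longrightarrow> length (c @ tl d) = length c + length d - 1"
  by (cases d) (auto simp: mc_def)

lemma mc_pair: "cov z x \<Longrightarrow> mc z x [z, x]"
  by (auto simp: mc_def nth_Cons split: nat.splits)

lemma mc_exists: "(y::'a::{finite,complete_lattice}) \<le> x \<Longrightarrow> \<exists>c. mc y x c"
proof (induction x rule: measure_induct_rule[where f="\<lambda>x. card {z. z < x}"])
  case (less x)
  show ?case
  proof (cases "y = x")
    case True then show ?thesis using mc_single[of y x x] by blast
  next
    case False
    hence "y < x" using less.prems by simp
    then obtain z where z: "y \<le> z" "cov z x" using exists_cov_below by blast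
    have zx: "z < x" using z(2) cov_le by blast
    have "{u. u < z} \<subseteq> {u. u < x}"
    proof
      fix u assume "u \<in> {u. u < z}" thus "u \<in> {u. u < x}" using less_trans[of u z x] zx by simp
    qed
    moreover have "z \<in> {u. u < x}" "z \<notin> {u. u < z}" using zx by simp_all
    ultimately have "{u. u < z} \<subset> {u. u < x}" by blast
    hence "card {u. u < z} < card {u. u < x}" by (simp add: psubset_card_mono)
    then obtain c where "mc y z c" using less.IH z(1) by blast
    from mc_append[OF this mc_pair[OF z(2)]] show ?thesis by blast
  qed
qed

lemma mc_take: "mc y x c \<Longrightarrow> i < length c \<Longrightarrow> mc y (c!i) (take (Suc i) c)"
proof -
  assume h: "mc y x c" "i < length c"
  have l: "length (take (Suc i) c) = Suc i" using h(2) by simp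
  have "take (Suc i) c \<noteq> []" using l by auto
  moreover have "hd (take (Suc i) c) = y" using mc_nth0[OF h(1)] h(2) by (cases c) auto
  moreover have "last (take (Suc i) c) = c!i"
    using l \<open>take (Suc i) c \<noteq> []\<close> by (simp add: last_conv_nth)
  moreover have "\<forall>j. Suc j < length (take (Suc i) c) \<longrightarrow> cov (take (Suc i) c ! j) (take (Suc i) c ! Suc j)"
    using l mc_cov[OF h(1)] h(2) by simp
  ultimately show ?thesis unfolding mc_def by blast
qed

lemma mc_drop: "mc y x c \<Longrightarrow> i < length c \<Longrightarrow> mc (c!i) x (drop i c)"
proof -
  assume h: "mc y x c" "i < length c"
  have ne: "drop i c \<noteq> []" using h(2) by simp
  moreover have "hd (drop i c) = c!i" using h(2) by (simp add: hd_drop_conv_nth)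
  moreover have "last (drop i c) = x" using h(1) ne unfolding mc_def by simp
  moreover have "\<forall>j. Suc j < length (drop i c) \<longrightarrow> cov (drop i c ! j) (drop i c ! Suc j)"
  proof (intro allI impI)
    fix j assume "Suc j < length (drop i c)"
    hence "Suc (i + j) < length c" by simp
    from mc_cov[OF h(1) this] show "cov (drop i c ! j) (drop i c ! Suc j)" using h(2) by simp
  qed
  ultimately show ?thesis unfolding mc_def by blast
qed

lemma chain_Sup_in:
  fixes C :: "'a::complete_lattice set"
  shows "finite C \<Longrightarrow> C \<noteq> {} \<Longrightarrow> Complete_Partial_Order.chain (\<le>) C \<Longrightarrow> Sup C \<in> C"
proof (induction C rule: finite_ne_induct)
  case (singleton x) then show ?case by simp
next
  case (insert x F)
  have ch: "Complete_Partial_Order.chain (\<le>) F"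
    using insert.prems chain_subset[of "(\<le>)" "insert x F" F] by blast
  hence s: "Sup F \<in> F" using insert.IH by simp
  have "x \<le> Sup F \<or> Sup F \<le> x" using insert.prems s unfolding chain_def by blast
  moreover have "Sup (insert x F) = sup x (Sup F)" by simp
  ultimately show ?case
  proof (elim disjE)
    assume "x \<le> Sup F" "Sup (insert x F) = sup x (Sup F)"
    hence "Sup (insert x F) = Sup F" by (simp add: sup.absorb2)
    thus ?thesis using s by simp
  next
    assume "Sup F \<le> x" "Sup (insert x F) = sup x (Sup F)"
    hence "Sup (insert x F) = x" by (simp add: sup.absorb1)
    thus ?thesis by simp
  qed
qed

context geo begin

lemma jd_aux: "\<forall>y c d. length c = k \<longrightarrow> mc y x c \<longrightarrow> mc y (x::'a) d \<longrightarrow> length d = k"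
proof (induction k rule: less_induct)
  case (less k)
  show ?case
  proof (intro allI impI)
    fix y c d assume h: "length c = k" "mc y x c" "mc y x d"
    show "length d = k"
    proof (cases "length c = 1")
      case True
      hence "y = x" using mc_nth0[OF h(2)] mc_last[OF h(2)] by simp
      show ?thesis
      proof (rule ccontr)
        assume "length d \<noteq> k"
        moreover have "0 < length d" using mc_ne[OF h(3)] .
        ultimately have "0 < length d - 1" using True h(1) by linarith
        moreover have "length d - 1 < length d" using mc_ne[OF h(3)] by linarith
        ultimately have "d!0 < d!(length d - 1)" using mc_less[OF h(3)] by blast
        thus False using mc_nth0[OF h(3)] mc_last[OF h(3)] \<open>y = x\<close> by simp
      qed
    next
      case False
      hence c2: "2 \<le> length c" using mc_ne[OF h(2)] by linarith
      from mc_tl[OF h(2) c2] have tc: "mc (c!1) x (tl c)" "cov y (c!1)" by simp_all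
      have d2: "2 \<le> length d"
      proof (rule ccontr)
        assume "\<not> 2 \<le> length d"
        hence "length d = 1" using mc_ne[OF h(3)] by linarith
        hence "y = x" using mc_nth0[OF h(3)] mc_last[OF h(3)] by simp
        have "c!0 < c!(length c - 1)" using mc_less[OF h(2), of 0 "length c - 1"] c2 by simp
        thus False using mc_nth0[OF h(2)] mc_last[OF h(2)] \<open>y = x\<close> by simp
      qed
      from mc_tl[OF h(3) d2] have td: "mc (d!1) x (tl d)" "cov y (d!1)" by simp_all
      let ?u = "c!1" and ?v = "d!1"
      have ltk: "length (tl c) < k" using h(1) c2 by simp
      show ?thesis
      proof (cases "?u = ?v")
        case True
        hence "length (tl d) = length (tl c)" using less.IH[OF ltk] tc(1) td(1) by metis
        thus ?thesis using h(1) c2 d2 by simp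
      next
        case False
        have "y \<le> inf ?u ?v" using less_imp_le[OF cov_le[OF tc(2)]] less_imp_le[OF cov_le[OF td(2)]] by simp
        have iy: "inf ?u ?v = y"
        proof (rule ccontr)
          assume "inf ?u ?v \<noteq> y"
          hence "inf ?u ?v = ?u" using cov_mid[OF tc(2) \<open>y \<le> inf ?u ?v\<close>] by simp
          hence "?u \<le> ?v" by (metis inf.absorb_iff1)
          hence "?u < ?v" using False by simp
          thus False using td(2) cov_le[OF tc(2)] unfolding cov_def by blast
        qed
        have cu: "cov ?u (sup ?u ?v)"
        proof -
          have "cov (inf ?v ?u) ?v" using td(2) iy by (simp add: inf_commute)
          from semimod[OF this] show ?thesis by (simp add: sup_commute)
        qed
        have cv: "cov ?v (sup ?u ?v)"
        proof -
          have "cov (inf ?u ?v) ?u" using tc(2) iy by simp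
          from semimod[OF this] show ?thesis .
        qed
        have "?u \<le> x" "?v \<le> x" using mc_yx[OF tc(1)] mc_yx[OF td(1)] by simp_all
        hence "sup ?u ?v \<le> x" by simp
        then obtain e where e: "mc (sup ?u ?v) x e" using mc_exists by blast
        have e1: "mc ?u x (?u # e)" using mc_Cons[OF cu e] .
        have e2: "mc ?v x (?v # e)" using mc_Cons[OF cv e] .
        have "length (?u # e) = length (tl c)" using less.IH[OF ltk] tc(1) e1 by metis
        hence l2: "length (?v # e) < k" using ltk by simp
        have "length (tl d) = length (?v # e)" using less.IH[OF l2] e2 td(1) by metis
        thus ?thesis using \<open>length (?u # e) = length (tl c)\<close> h(1) c2 d2 by simp
      qed
    qed
  qed
qed

lemma jd: "mc y x c \<Longrightarrow> mc y (x::'a) d \<Longrightarrow> length c = length d"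
  using jd_aux by metis

lemma chain_bound:
  "Complete_Partial_Order.chain (\<le>) C \<Longrightarrow> C \<subseteq> {z. z \<le> x} \<Longrightarrow> mc bot (x::'a) c \<Longrightarrow> card C \<le> length c"
proof (induction "card C" arbitrary: C x c rule: less_induct)
  case less
  show ?case
  proof (cases "C = {}")
    case True then show ?thesis by simp
  next
    case False
    let ?m = "Sup C"
    have mC: "?m \<in> C" using chain_Sup_in[OF _ False less.prems(1)] by simp
    let ?C' = "C - {?m}"
    show ?thesis
    proof (cases "?C' = {}")
      case True
      hence "C = {?m}" using mC by blast
      hence "card C = 1" using card_1_singleton_iff[of C] by auto
      thus ?thesis using mc_ne[OF less.prems(3)] by linarith
    next
      case False
      have ch': "Complete_Partial_Order.chain (\<le>) ?C'"
        using less.prems(1) chain_subset[of "(\<le>)" C ?C'] by blast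
      let ?m' = "Sup ?C'"
      have m'C: "?m' \<in> ?C'" using chain_Sup_in[OF _ False ch'] by simp
      have "?m' \<le> ?m" using Sup_subset_mono[of ?C' C] by blast
      hence m'm: "?m' < ?m" using m'C by auto
      have "?m \<le> x" using mC less.prems(2) by blast
      hence m'x: "?m' < x" using m'm by simp
      obtain c' where c': "mc bot ?m' c'" using mc_exists[of bot ?m'] by auto
      have "card ?C' < card C" using card_Diff1_less[OF finite[of C] mC] .
      moreover have "?C' \<subseteq> {z. z \<le> ?m'}" using Sup_upper[of _ ?C'] by blast
      ultimately have "card ?C' \<le> length c'" using less.hyps ch' c' by blast
      obtain d where d: "mc ?m' x d" using mc_exists[of ?m' x] less_imp_le[OF m'x] by auto
      have "2 \<le> length d"
      proof (rule ccontr)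
        assume "\<not> 2 \<le> length d"
        hence "length d = 1" using mc_ne[OF d] by linarith
        thus False using mc_nth0[OF d] mc_last[OF d] m'x by simp
      qed
      have "length (c' @ tl d) = length c" using jd[OF mc_append[OF c' d] less.prems(3)] .
      hence "length c' + 1 \<le> length c" using mc_append_len[OF c' d] \<open>2 \<le> length d\<close> by simp
      moreover have "card C = card ?C' + 1" using card_Suc_Diff1[OF finite[of C] mC] by simp
      ultimately show ?thesis using \<open>card ?C' \<le> length c'\<close> by simp
    qed
  qed
qed

lemma rnk_mc: "mc bot (x::'a) c \<Longrightarrow> rnk x = length c - 1"
proof -
  assume c: "mc bot x c"
  let ?K = "{card C |C. C \<subseteq> {y. y \<le> x} \<and> Complete_Partial_Order.chain (\<le>) C}"
  have ch: "Complete_Partial_Order.chain (\<le>) (set c)"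
    unfolding chain_def
  proof (intro ballI)
    fix a b assume "a \<in> set c" "b \<in> set c"
    then obtain i j where ij: "i < length c" "j < length c" "a = c!i" "b = c!j" by (auto simp: in_set_conv_nth)
    show "a \<le> b \<or> b \<le> a"
    proof (cases "i \<le> j")
      case True then show ?thesis using mc_le[OF c True ij(2)] ij by simp
    next
      case False then show ?thesis using mc_le[OF c _ ij(1), of j] ij by simp
    qed
  qed
  have sub: "set c \<subseteq> {y. y \<le> x}" using mc_le_nth[OF c] by (auto simp: in_set_conv_nth)
  have "card (set c) = length c" using mc_distinct[OF c] by (simp add: distinct_card)
  hence "length c = card (set c) \<and> set c \<subseteq> {y. y \<le> x} \<and> Complete_Partial_Order.chain (\<le>) (set c)"
    using ch sub by simp
  hence inK: "length c \<in> ?K" by blast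
  have bnd: "\<And>k. k \<in> ?K \<Longrightarrow> k \<le> length c"
  proof -
    fix k assume "k \<in> ?K"
    then obtain C where C: "k = card C" "C \<subseteq> {y. y \<le> x}" "Complete_Partial_Order.chain (\<le>) C" by blast
    show "k \<le> length c" using chain_bound[OF C(3) C(2) c] C(1) by simp
  qed
  have fin: "finite ?K"
  proof (rule finite_subset)
    show "?K \<subseteq> {..length c}" using bnd by blast
  qed simp
  have "Max ?K = length c" by (rule Max_eqI[OF fin bnd inK])
  thus ?thesis unfolding rnk_def by simp
qed

lemma rnk_exists: "\<exists>c. mc bot (x::'a) c \<and> rnk x = length c - 1"
  using mc_exists[of bot x] rnk_mc by auto

lemma rnk_less: "(y::'a) < x \<Longrightarrow> rnk y < rnk x"
proof -
  assume yx: "y < x"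
  obtain c where c: "mc bot y c" using mc_exists[of bot y] by auto
  obtain d where d: "mc y x d" using mc_exists[of y x] less_imp_le[OF yx] by auto
  have "2 \<le> length d"
  proof (rule ccontr)
    assume "\<not> 2 \<le> length d"
    hence "length d = 1" using mc_ne[OF d] by linarith
    thus False using mc_nth0[OF d] mc_last[OF d] yx by simp
  qed
  have "rnk x = length (c @ tl d) - 1" using rnk_mc[OF mc_append[OF c d]] .
  moreover have "rnk y = length c - 1" using rnk_mc[OF c] .
  moreover have "length (c @ tl d) = length c + length d - 1" using mc_append_len[OF c d] .
  moreover have "0 < length c" using mc_ne[OF c] .
  ultimately show ?thesis using \<open>2 \<le> length d\<close> by arith
qed

lemma rnk_cov: "cov (y::'a) x \<Longrightarrow> rnk x = Suc (rnk y)"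
proof -
  assume yx: "cov y x"
  obtain c where c: "mc bot y c" using mc_exists[of bot y] by auto
  have "rnk x = length (c @ tl [y, x]) - 1" using rnk_mc[OF mc_append[OF c mc_pair[OF yx]]] .
  moreover have "rnk y = length c - 1" using rnk_mc[OF c] .
  ultimately show ?thesis using mc_ne[OF c] by simp
qed

lemma rnk_le_eq: "(y::'a) \<le> x \<Longrightarrow> rnk y = rnk x \<Longrightarrow> y = x"
proof (rule ccontr)
  assume h: "y \<le> x" "rnk y = rnk x" "y \<noteq> x"
  hence "y < x" by simp
  from rnk_less[OF this] h(2) show False by simp
qed

lemma cov_of_rnk: "(y::'a) \<le> x \<Longrightarrow> rnk x = Suc (rnk y) \<Longrightarrow> cov y x"
proof -
  assume h: "y \<le> x" "rnk x = Suc (rnk y)"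
  have "y \<noteq> x" using h(2) by auto
  hence "y < x" using h(1) by simp
  moreover have "\<not> (\<exists>z. y < z \<and> z < x)"
  proof
    assume "\<exists>z. y < z \<and> z < x"
    then obtain z where "y < z" "z < x" by blast
    hence "rnk y < rnk z" "rnk z < rnk x" using rnk_less by blast+
    thus False using h(2) by simp
  qed
  ultimately show ?thesis unfolding cov_def by simp
qed

lemma maxchain_rnk: "maxchain (M::'a list) \<Longrightarrow> i < length M \<Longrightarrow> rnk (M!i) = i"
proof -
  assume h: "maxchain M" "i < length M"
  have "mc bot (M!i) (take (Suc i) M)" using mc_take[of bot top M i] h by (simp add: maxchain_mc)
  from rnk_mc[OF this] h(2) show ?thesis by simp
qed

lemma maxchain_len: "maxchain (M::'a list) \<Longrightarrow> length M = Suc (rnk (top::'a))"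
  using rnk_mc[of top M] mc_ne[of bot top M] by (simp add: maxchain_mc)

lemma chain_extend:
  "finite C \<Longrightarrow> Complete_Partial_Order.chain (\<le>) C \<Longrightarrow> \<forall>z\<in>C. y \<le> z \<and> z \<le> x \<Longrightarrow> y \<le> (x::'a) \<Longrightarrow>
   \<exists>c. mc y x c \<and> C \<subseteq> set c"
proof (induction "card C" arbitrary: C x rule: less_induct)
  case less
  show ?case
  proof (cases "C = {}")
    case True then show ?thesis using mc_exists[OF less.prems(4)] by auto
  next
    case False
    let ?m = "Sup C"
    have mC: "?m \<in> C" using chain_Sup_in[OF less.prems(1) False less.prems(2)] .
    let ?C' = "C - {?m}"
    have ch': "Complete_Partial_Order.chain (\<le>) ?C'"
      using less.prems(2) chain_subset[of "(\<le>)" C ?C'] by blast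
    have "card ?C' < card C" using card_Diff1_less[OF less.prems(1) mC] .
    moreover have "\<forall>z\<in>?C'. y \<le> z \<and> z \<le> ?m" using less.prems(3) Sup_upper[of _ C] by blast
    moreover have "y \<le> ?m" using less.prems(3) mC by blast
    ultimately obtain c where c: "mc y ?m c" "?C' \<subseteq> set c"
      using less.hyps[of ?C' ?m] ch' less.prems(1) by blast
    obtain d where d: "mc ?m x d" using mc_exists[of ?m x] less.prems(3) mC by blast
    have "?m \<in> set c" using mc_last[OF c(1)] mc_ne[OF c(1)] nth_mem[of "length c - 1" c] by simp
    hence "C \<subseteq> set (c @ tl d)" using c(2) by auto
    thus ?thesis using mc_append[OF c(1) d] by blast
  qed
qed

end


lemma lexless_irrefl: "\<not> lexless w xs xs"
  unfolding lexless_def by (simp add: lexord_irreflexive)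

lemma lexless_trans: "lexless w xs ys \<Longrightarrow> lexless w ys zs \<Longrightarrow> lexless w xs zs"
  unfolding lexless_def by (rule lexord_trans) (auto simp: trans_def)

lemma lexless_asym: "lexless w xs ys \<Longrightarrow> \<not> lexless w ys xs"
  using lexless_trans lexless_irrefl by metis

lemma lexless_total: "map w xs \<noteq> map w ys \<Longrightarrow> lexless w xs ys \<or> lexless w ys xs"
proof -
  assume h: "map w xs \<noteq> map w ys"
  have "\<forall>a b. (a, b) \<in> {(a, b). a < (b::nat)} \<or> a = b \<or> (b, a) \<in> {(a, b). a < (b::nat)}" by auto
  from lexord_linear[OF this, of "map w xs" "map w ys"] h show ?thesis unfolding lexless_def by blast
qed

lemma lexless_at:
  assumes "length xs = length ys" "q < length xs" "\<forall>i<q. w (xs!i) = w (ys!i)" "w (xs!q) < w (ys!q)"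
  shows "lexless w xs ys"
  unfolding lexless_def lexord_take_index_conv
proof (intro disjI2 exI[of _ q] conjI)
  show "q < min (length (map w xs)) (length (map w ys))" using assms by simp
  show "take q (map w xs) = take q (map w ys)"
    using assms by (intro nth_equalityI) auto
  show "(map w xs ! q, map w ys ! q) \<in> {(a, b). a < b}" using assms by simp
qed

lemma finite_has_min_rel:
  assumes "finite X" "X \<noteq> {}" "\<And>x y z. R x y \<Longrightarrow> R y z \<Longrightarrow> R x z" "\<And>x. \<not> R x x"
  shows "\<exists>m\<in>X. \<forall>y\<in>X. \<not> R y m"
  using assms(1,2)
proof (induction X rule: finite_ne_induct)
  case (singleton x) then show ?case using assms(4) by auto
next
  case (insert x F)
  then obtain m where m: "m \<in> F" "\<forall>y\<in>F. \<not> R y m" by blast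
  show ?case
  proof (cases "R x m")
    case True
    have "\<forall>y\<in>insert x F. \<not> R y x" using m True assms(3,4) by blast
    then show ?thesis by blast
  next
    case False then show ?thesis using m by blast
  qed
qed

lemma mc_chain: "mc y x c \<Longrightarrow> Complete_Partial_Order.chain (\<le>) (set c)"
  unfolding chain_def
proof (intro ballI)
  fix a b assume c: "mc y x c" and "a \<in> set c" "b \<in> set c"
  then obtain i j where ij: "i < length c" "j < length c" "a = c!i" "b = c!j" by (auto simp: in_set_conv_nth)
  show "a \<le> b \<or> b \<le> a"
  proof (cases "i \<le> j")
    case True then show ?thesis using mc_le[OF c True ij(2)] ij by simp
  next
    case False then show ?thesis using mc_le[OF c _ ij(1), of j] ij by simp
  qed
qed

lemma labs_len: "length (labs w c) = length c - 1"
  by (simp add: labs_def)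

lemma labs_nth: "i < length c - 1 \<Longrightarrow> labs w c ! i = lab w (c!i) (c!Suc i)"
  by (simp add: labs_def)

context geo begin

lemma lab_prop: "cov (u::'a) v \<Longrightarrow> lab w u v \<in> atoms_below v - atoms_below u \<and>
   (\<forall>b\<in>atoms_below v - atoms_below u. w (lab w u v) \<le> w b)"
proof -
  assume c: "cov u v"
  obtain a where "a \<in> atoms_below v" "a \<notin> atoms_below u" using less_atom[OF cov_le[OF c]] by blast
  hence ne: "atoms_below v - atoms_below u \<noteq> {}" by blast
  have inj: "inj_on w (atoms_below v - atoms_below u)"
    using winj by (rule inj_on_subset) (auto simp: atoms_below_def)
  show ?thesis unfolding lab_def using amin_prop[OF finite ne inj] .
qed

lemma lab_atom: "cov (u::'a) v \<Longrightarrow> lab w u v \<in> atoms"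
  using lab_prop[of u v] by (auto simp: atoms_below_def)

lemma lab_le: "cov (u::'a) v \<Longrightarrow> lab w u v \<le> v"
  using lab_prop[of u v] by (auto simp: atoms_below_def)

lemma lab_nle: "cov (u::'a) v \<Longrightarrow> \<not> lab w u v \<le> u"
  using lab_prop[of u v] by (auto simp: atoms_below_def)

lemma lab_sup: "cov (u::'a) v \<Longrightarrow> sup u (lab w u v) = v"
  using cov_sup_atom lab_le lab_nle by blast

lemma lab_min: "cov (u::'a) v \<Longrightarrow> b \<in> atoms \<Longrightarrow> b \<le> v \<Longrightarrow> \<not> b \<le> u \<Longrightarrow> w (lab w u v) \<le> w b"
  using lab_prop[of u v] by (auto simp: atoms_below_def)

lemma w_eq_atoms: "a \<in> atoms \<Longrightarrow> b \<in> atoms \<Longrightarrow> w a = w b \<Longrightarrow> a = b"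
  using winj inj_onD by metis

lemma maxchain_labs_atoms: "maxchain (M::'a list) \<Longrightarrow> set (labs w M) \<subseteq> atoms"
proof
  fix a assume h: "maxchain M" "a \<in> set (labs w M)"
  then obtain i where i: "i < length M - 1" "a = labs w M ! i" by (auto simp: in_set_conv_nth labs_len)
  have "cov (M!i) (M!Suc i)" using h(1) i(1) by (simp add: maxchain_def)
  thus "a \<in> atoms" using lab_atom labs_nth[OF i(1)] i(2) by simp
qed

lemma maxchain_cov: "maxchain (M::'a list) \<Longrightarrow> Suc i < length M \<Longrightarrow> cov (M!i) (M!Suc i)"
  by (simp add: maxchain_def)

lemma labs_step: "maxchain (M::'a list) \<Longrightarrow> Suc i < length M \<Longrightarrow> M!Suc i = sup (M!i) (labs w M ! i)"
proof -
  assume h: "maxchain M" "Suc i < length M"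
  have c: "cov (M!i) (M!Suc i)" using maxchain_cov[OF h] .
  have "labs w M ! i = lab w (M!i) (M!Suc i)" using labs_nth[of i M w] h(2) by simp
  thus ?thesis using lab_sup[OF c] by simp
qed

lemma maxchain_prefix:
  assumes "maxchain (M::'a list)" "maxchain (N::'a list)" "\<forall>i<q. labs w M ! i = labs w N ! i"
    "q < length M" "q < length N"
  shows "M!q = N!q"
  using assms(3-5)
proof (induction q)
  case 0 then show ?case using assms(1,2) by (simp add: maxchain_mc mc_nth0)
next
  case (Suc q)
  have "M!q = N!q" using Suc by simp
  moreover have "labs w M ! q = labs w N ! q" using Suc.prems(1) by simp
  ultimately show ?case using labs_step[OF assms(1) Suc.prems(2)] labs_step[OF assms(2) Suc.prems(3)] by simp
qed

lemma maxchain_same_len: "maxchain (M::'a list) \<Longrightarrow> maxchain (N::'a list) \<Longrightarrow> length M = length N"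
  using maxchain_len[of M] maxchain_len[of N] by simp

lemma labs_inj: "maxchain (M::'a list) \<Longrightarrow> maxchain (N::'a list) \<Longrightarrow> labs w M = labs w N \<Longrightarrow> M = N"
proof -
  assume h: "maxchain M" "maxchain N" "labs w M = labs w N"
  have l: "length M = length N" using maxchain_same_len h by blast
  show "M = N"
  proof (rule nth_equalityI[OF l])
    fix i assume "i < length M"
    thus "M!i = N!i" using maxchain_prefix[OF h(1,2), of i] h(3) l by simp
  qed
qed

lemma map_w_eq: "set xs \<subseteq> atoms \<Longrightarrow> set ys \<subseteq> atoms \<Longrightarrow> map w xs = map w ys \<Longrightarrow> xs = ys"
proof -
  assume h: "set xs \<subseteq> atoms" "set ys \<subseteq> atoms" "map w xs = map w ys"
  have "inj_on w (set xs \<union> set ys)" by (rule inj_on_subset[OF winj]) (use h in auto)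
  thus ?thesis using h(3) inj_on_map_eq_map by blast
qed

lemma labs_total: "maxchain (M::'a list) \<Longrightarrow> maxchain (N::'a list) \<Longrightarrow> labs w M \<noteq> labs w N \<Longrightarrow>
   lexless w (labs w M) (labs w N) \<or> lexless w (labs w N) (labs w M)"
  using lexless_total map_w_eq maxchain_labs_atoms by metis

lemma maxchain_exists: "finite \<gamma> \<Longrightarrow> Complete_Partial_Order.chain (\<le>) \<gamma> \<Longrightarrow> \<exists>M. maxchain M \<and> (\<gamma>::'a set) \<subseteq> set M"
  using chain_extend[of \<gamma> bot top] by (simp add: maxchain_mc)

lemma ffirst_prop:
  assumes "maxchain (M0::'a list)" "\<gamma> \<subseteq> set M0"
  shows "maxchain (ffirst w \<gamma>) \<and> \<gamma> \<subseteq> set (ffirst w \<gamma>) \<and>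
    (\<forall>M'. maxchain M' \<and> \<gamma> \<subseteq> set M' \<longrightarrow>
        labs w (ffirst w \<gamma>) = labs w M' \<or> lexless w (labs w (ffirst w \<gamma>)) (labs w M'))"
proof -
  let ?Ms = "{M. maxchain M \<and> \<gamma> \<subseteq> set M}"
  have "?Ms \<subseteq> {xs. set xs \<subseteq> UNIV \<and> length xs = Suc (rnk (top::'a))}"
    using maxchain_len by auto
  hence fin: "finite ?Ms" using finite_subset finite_lists_length_eq[OF finite[of "UNIV::'a set"]] by blast
  have ne: "?Ms \<noteq> {}" using assms by blast
  obtain m where m: "m \<in> ?Ms" "\<forall>y\<in>?Ms. \<not> lexless w (labs w y) (labs w m)"
    using finite_has_min_rel[OF fin ne, of "\<lambda>a b. lexless w (labs w a) (labs w b)"]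
      lexless_trans lexless_irrefl by blast
  let ?P = "\<lambda>M. maxchain M \<and> \<gamma> \<subseteq> set M \<and>
     (\<forall>M'. maxchain M' \<and> \<gamma> \<subseteq> set M' \<longrightarrow>
        labs w M = labs w M' \<or> lexless w (labs w M) (labs w M'))"
  have Pm: "?P m"
  proof (intro conjI allI impI)
    show "maxchain m" "\<gamma> \<subseteq> set m" using m(1) by auto
    fix M' assume "maxchain M' \<and> \<gamma> \<subseteq> set M'"
    thus "labs w m = labs w M' \<or> lexless w (labs w m) (labs w M')"
      using m labs_total[of m M'] by blast
  qed
  have "ffirst w \<gamma> = m" unfolding ffirst_def
  proof (rule the_equality)
    show "?P m" using Pm .
    fix M assume PM: "?P M"
    have "labs w M = labs w m"
      using PM Pm lexless_asym by metis
    thus "M = m" using labs_inj PM Pm by blast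
  qed
  thus ?thesis using Pm by simp
qed

end

locale geoS = geo w for w :: "'a::{finite,complete_lattice} \<Rightarrow> nat" +
  fixes n :: nat and S :: "nat set"
  assumes rank: "rnk (top::'a) = n"
    and Ssub: "S \<subseteq> {1..<n}"
begin

lemma len_n: "maxchain (M::'a list) \<Longrightarrow> length M = Suc n"
  using maxchain_len rank by simp

lemma labs_len_n: "maxchain (M::'a list) \<Longrightarrow> length (labs w M) = n"
  using len_n[of M] labs_len[of w M] by simp

lemma mS_chain: "\<gamma> \<in> maxchainsS S \<Longrightarrow> Complete_Partial_Order.chain (\<le>) (\<gamma>::'a set)"
  by (simp add: maxchainsS_def)

lemma mS_maxchain: "\<gamma> \<in> maxchainsS S \<Longrightarrow> \<exists>M. maxchain M \<and> (\<gamma>::'a set) \<subseteq> set M"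
  using maxchain_exists[OF finite mS_chain] by blast

lemma setM_PS: "maxchain (M::'a list) \<Longrightarrow> x \<in> set M \<inter> PS S \<longleftrightarrow> (\<exists>p\<in>S. x = M!p)"
proof
  assume h: "maxchain M" "x \<in> set M \<inter> PS S"
  then obtain i where i: "i < length M" "x = M!i" by (auto simp: in_set_conv_nth)
  have "rnk x = i" using maxchain_rnk[OF h(1) i(1)] i(2) by simp
  hence "i \<in> S" using h(2) by (simp add: PS_def)
  thus "\<exists>p\<in>S. x = M!p" using i by blast
next
  assume h: "maxchain M" "\<exists>p\<in>S. x = M!p"
  then obtain p where p: "p \<in> S" "x = M!p" by blast
  have pl: "p < length M" using p(1) Ssub len_n[OF h(1)] by auto
  have "rnk x = p" using maxchain_rnk[OF h(1) pl] p(2) by simp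
  thus "x \<in> set M \<inter> PS S" using p pl by (simp add: PS_def)
qed

lemma mS_eq: "\<gamma> \<in> maxchainsS S \<Longrightarrow> maxchain M \<Longrightarrow> \<gamma> \<subseteq> set M \<Longrightarrow> (\<gamma>::'a set) = set M \<inter> PS S"
proof -
  assume h: "\<gamma> \<in> maxchainsS S" "maxchain M" "\<gamma> \<subseteq> set M"
  have ch: "Complete_Partial_Order.chain (\<le>) (set M \<inter> PS S)"
    using mc_chain[of bot top M] h(2) chain_subset[of "(\<le>)" "set M"] by (simp add: maxchain_mc)
  have "\<gamma> \<subseteq> PS S" using h(1) by (simp add: maxchainsS_def)
  hence "\<gamma> \<subseteq> set M \<inter> PS S" using h(3) by blast
  thus ?thesis using h(1) ch unfolding maxchainsS_def by blast
qed

lemma mS_of: "maxchain (M::'a list) \<Longrightarrow> set M \<inter> PS S \<in> maxchainsS S"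
proof -
  assume M: "maxchain M"
  have ch: "Complete_Partial_Order.chain (\<le>) (set M \<inter> PS S)"
    using mc_chain[of bot top M] M chain_subset[of "(\<le>)" "set M"] by (simp add: maxchain_mc)
  have "\<forall>D. D \<subseteq> PS S \<and> Complete_Partial_Order.chain (\<le>) D \<and> set M \<inter> PS S \<subseteq> D \<longrightarrow> D = set M \<inter> PS S"
  proof (intro allI impI)
    fix D assume D: "D \<subseteq> PS S \<and> Complete_Partial_Order.chain (\<le>) D \<and> set M \<inter> PS S \<subseteq> D"
    show "D = set M \<inter> PS S"
    proof
      show "D \<subseteq> set M \<inter> PS S"
      proof
        fix y assume y: "y \<in> D"
        have yS: "rnk y \<in> S" using y D by (auto simp: PS_def)
        have rl: "rnk y < length M" using yS Ssub len_n[OF M] by auto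
        have "M!(rnk y) \<in> set M \<inter> PS S" using setM_PS[OF M] yS by blast
        hence "M!(rnk y) \<in> D" using D by blast
        hence "y \<le> M!(rnk y) \<or> M!(rnk y) \<le> y" using D y unfolding chain_def by blast
        moreover have "rnk (M!(rnk y)) = rnk y" using maxchain_rnk[OF M rl] .
        ultimately have "y = M!(rnk y)" using rnk_le_eq by metis
        thus "y \<in> set M \<inter> PS S" using \<open>M!(rnk y) \<in> set M \<inter> PS S\<close> by simp
      qed
    qed (use D in blast)
  qed
  thus ?thesis using ch unfolding maxchainsS_def by blast
qed

end


context geoS begin

definition asc :: "'a list \<Rightarrow> nat \<Rightarrow> bool" where
  "asc M p \<longleftrightarrow> w (labs w M ! (p - 1)) < w (labs w M ! p)"

lemma labs_nth_M: "maxchain (M::'a list) \<Longrightarrow> i < n \<Longrightarrow> labs w M ! i = lab w (M!i) (M!Suc i)"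
  using labs_nth[of i M w] len_n[of M] by simp

lemma labs_cov: "maxchain (M::'a list) \<Longrightarrow> i < n \<Longrightarrow> cov (M!i) (M!Suc i)"
  using maxchain_cov[of M i] len_n[of M] by simp

lemma labs_atom: "maxchain (M::'a list) \<Longrightarrow> i < n \<Longrightarrow> labs w M ! i \<in> atoms"
  using labs_nth_M lab_atom labs_cov by simp

lemma M_le: "maxchain (M::'a list) \<Longrightarrow> i \<le> j \<Longrightarrow> j \<le> n \<Longrightarrow> M!i \<le> M!j"
  using mc_le[of bot top M i j] len_n[of M] by (simp add: maxchain_mc)

lemma M_top: "maxchain (M::'a list) \<Longrightarrow> M!n = top"
  using mc_last[of bot top M] len_n[of M] by (simp add: maxchain_mc)

lemma M_bot: "maxchain (M::'a list) \<Longrightarrow> M!0 = bot"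
  using mc_nth0[of bot top M] by (simp add: maxchain_mc)

lemma labs_le: "maxchain (M::'a list) \<Longrightarrow> i < n \<Longrightarrow> labs w M ! i \<le> M!Suc i"
  using labs_nth_M lab_le labs_cov by simp

lemma labs_nle: "maxchain (M::'a list) \<Longrightarrow> i < n \<Longrightarrow> \<not> labs w M ! i \<le> M!i"
  using labs_nth_M lab_nle labs_cov by simp

lemma labs_min: "maxchain (M::'a list) \<Longrightarrow> i < n \<Longrightarrow> b \<in> atoms \<Longrightarrow> b \<le> M!Suc i \<Longrightarrow> \<not> b \<le> M!i
   \<Longrightarrow> w (labs w M ! i) \<le> w b"
  using labs_nth_M lab_min labs_cov by simp

lemma consec_ne: "maxchain (M::'a list) \<Longrightarrow> 0 < p \<Longrightarrow> p < n \<Longrightarrow> w (labs w M ! (p - 1)) \<noteq> w (labs w M ! p)"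
proof
  assume h: "maxchain M" "0 < p" "p < n" "w (labs w M ! (p - 1)) = w (labs w M ! p)"
  have "labs w M ! (p - 1) = labs w M ! p"
    using w_eq_atoms[OF labs_atom[OF h(1)] labs_atom[OF h(1)] h(4)] h(2,3) by simp
  moreover have "labs w M ! (p - 1) \<le> M!p" using labs_le[OF h(1), of "p - 1"] h(2,3) by simp
  ultimately show False using labs_nle[OF h(1) h(3)] by simp
qed

lemma not_asc: "maxchain (M::'a list) \<Longrightarrow> 0 < p \<Longrightarrow> p < n \<Longrightarrow> \<not> asc M p \<Longrightarrow>
   w (labs w M ! p) < w (labs w M ! (p - 1))"
  using consec_ne[of M p] unfolding asc_def by linarith

lemma swap:
  assumes M: "maxchain (M::'a list)" and p: "0 < p" "p < n" and na: "\<not> asc M p"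
  shows "\<exists>x'. maxchain (M[p := x']) \<and> x' \<noteq> M!p \<and> lexless w (labs w (M[p := x'])) (labs w M)"
proof -
  let ?y = "M!(p - 1)" and ?x = "M!p" and ?z = "M!Suc p"
  let ?la = "labs w M ! (p - 1)" and ?lb = "labs w M ! p"
  have lt: "w ?lb < w ?la" using not_asc[OF M p na] .
  have lbA: "?lb \<in> atoms" using labs_atom[OF M p(2)] .
  have yx: "?y \<le> ?x" using M_le[OF M, of "p - 1" p] p by simp
  have yz: "?y \<le> ?z" using M_le[OF M, of "p - 1" "Suc p"] p by simp
  have lbz: "?lb \<le> ?z" using labs_le[OF M p(2)] .
  have lby: "\<not> ?lb \<le> ?y" using labs_nle[OF M p(2)] yx order_trans by blast
  let ?X = "atoms_below ?z - atoms_below ?y"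
  have lbX: "?lb \<in> ?X" using lbA lbz lby by (simp add: atoms_below_def)
  have injX: "inj_on w ?X" by (rule inj_on_subset[OF winj]) (auto simp: atoms_below_def)
  have Xne: "?X \<noteq> {}" using lbX by blast
  define c where "c = amin w ?X"
  have cX: "c \<in> ?X" and cmin: "\<forall>b\<in>?X. w c \<le> w b" using amin_prop[OF finite Xne injX] c_def by auto
  have cA: "c \<in> atoms" "c \<le> ?z" "\<not> c \<le> ?y" using cX by (auto simp: atoms_below_def)
  have wc: "w c \<le> w ?lb" using cmin lbX by blast
  define x' where "x' = sup ?y c"
  have c1: "cov ?y x'" using atom_cov[OF cA(1) cA(3)] x'_def by simp
  have x'z: "x' \<le> ?z" using yz cA(2) x'_def by simp
  have ry: "rnk ?y = p - 1" using maxchain_rnk[OF M, of "p - 1"] len_n[OF M] p by simp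
  have rz: "rnk ?z = Suc p" using maxchain_rnk[OF M, of "Suc p"] len_n[OF M] p by simp
  have rx': "rnk x' = p" using rnk_cov[OF c1] ry p by simp
  have c2: "cov x' ?z" using cov_of_rnk[OF x'z] rx' rz by simp
  let ?M' = "M[p := x']"
  have lenM': "length ?M' = Suc n" using len_n[OF M] by simp
  have nthM': "\<And>i. ?M'!i = (if i = p then x' else M!i)" using len_n[OF M] p by (simp add: nth_list_update)
  have mcM': "maxchain ?M'"
    unfolding maxchain_def
  proof (intro conjI allI impI)
    show "?M' \<noteq> []" using lenM' by auto
    show "hd ?M' = bot"
    proof -
      have "?M' \<noteq> []" using lenM' by auto
      hence "hd ?M' = ?M'!0" by (rule hd_conv_nth)
      thus ?thesis using nthM'[of 0] M_bot[OF M] p by simp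
    qed
    show "last ?M' = top"
    proof -
      have "?M' \<noteq> []" using lenM' by auto
      hence "last ?M' = ?M'!(length ?M' - 1)" by (rule last_conv_nth)
      thus ?thesis using nthM'[of n] M_top[OF M] p lenM' by simp
    qed
    fix i assume i: "Suc i < length ?M'"
    show "cov (?M'!i) (?M'!Suc i)"
    proof (cases "Suc i = p")
      case True
      hence "i = p - 1" by simp
      then show ?thesis using nthM'[of i] nthM'[of "Suc i"] c1 True by simp
    next
      case False
      show ?thesis
      proof (cases "i = p")
        case True then show ?thesis using nthM'[of i] nthM'[of "Suc i"] c2 by simp
      next
        case False
        then show ?thesis using nthM'[of i] nthM'[of "Suc i"] \<open>Suc i \<noteq> p\<close> maxchain_cov[OF M, of i] i len_n[OF M] by simp
      qed
    qed
  qed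
  have labc: "lab w ?y x' = c"
  proof -
    have lp: "lab w ?y x' \<in> atoms_below x' - atoms_below ?y" "\<forall>b\<in>atoms_below x' - atoms_below ?y. w (lab w ?y x') \<le> w b"
      using lab_prop[OF c1] by auto
    have "c \<in> atoms_below x' - atoms_below ?y" using cA x'_def by (simp add: atoms_below_def)
    hence "w (lab w ?y x') \<le> w c" using lp(2) by blast
    moreover have "lab w ?y x' \<in> ?X" using lp(1) x'z by (auto simp: atoms_below_def intro: order_trans)
    hence "w c \<le> w (lab w ?y x')" using cmin by blast
    ultimately have "w (lab w ?y x') = w c" by simp
    thus ?thesis using w_eq_atoms[OF lab_atom[OF c1] cA(1)] by simp
  qed
  have l1: "labs w ?M' ! (p - 1) = c"
    using labs_nth_M[OF mcM', of "p - 1"] p nthM'[of "p - 1"] nthM'[of p] labc by simp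
  have l2: "\<forall>i<p - 1. w (labs w ?M' ! i) = w (labs w M ! i)"
  proof (intro allI impI)
    fix i assume "i < p - 1"
    thus "w (labs w ?M' ! i) = w (labs w M ! i)"
      using labs_nth_M[OF mcM', of i] labs_nth_M[OF M, of i] p nthM'[of i] nthM'[of "Suc i"] by simp
  qed
  have lex: "lexless w (labs w ?M') (labs w M)"
  proof (rule lexless_at[of _ _ "p - 1"])
    show "length (labs w ?M') = length (labs w M)" using labs_len_n[OF mcM'] labs_len_n[OF M] by simp
    show "p - 1 < length (labs w ?M')" using labs_len_n[OF mcM'] p by simp
    show "\<forall>i<p - 1. w (labs w ?M' ! i) = w (labs w M ! i)" using l2 .
    show "w (labs w ?M' ! (p - 1)) < w (labs w M ! (p - 1))" using l1 wc lt by simp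
  qed
  have "x' \<noteq> M!p"
  proof
    assume "x' = M!p"
    hence "?M' = M" by simp
    thus False using lex lexless_irrefl by metis
  qed
  thus ?thesis using mcM' lex by blast
qed

lemma asc_chain:
  assumes M: "maxchain (M::'a list)" and "\<forall>i. q < i \<and> i < b \<longrightarrow> asc M i" "q \<le> r" "r < b"
  shows "w (labs w M ! q) \<le> w (labs w M ! r)"
  using assms(3,4)
proof (induction r)
  case 0 then show ?case by simp
next
  case (Suc r)
  show ?case
  proof (cases "q = Suc r")
    case True then show ?thesis by simp
  next
    case False
    hence "w (labs w M ! q) \<le> w (labs w M ! r)" using Suc by simp
    moreover have "asc M (Suc r)" using assms(2) Suc.prems False by simp
    ultimately show ?thesis unfolding asc_def by simp
  qed
qed

lemma first_entry:
  assumes M: "maxchain (M::'a list)" and "\<not> c \<le> M!q"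
  shows "k \<le> b - q \<Longrightarrow> c \<le> M!(q + k) \<Longrightarrow> \<exists>r. q \<le> r \<and> r < q + k \<and> c \<le> M!Suc r \<and> \<not> c \<le> M!r"
proof (induction k)
  case 0 then show ?case using assms(2) by simp
next
  case (Suc k)
  show ?case
  proof (cases "c \<le> M!(q + k)")
    case True
    then obtain r where "q \<le> r \<and> r < q + k \<and> c \<le> M!Suc r \<and> \<not> c \<le> M!r" using Suc by auto
    then show ?thesis by auto
  next
    case False then show ?thesis using Suc.prems by (intro exI[of _ "q + k"]) simp
  qed
qed

lemma EL:
  assumes M: "maxchain (M::'a list)" and N: "maxchain (N::'a list)" and qb: "q < b" "b \<le> n"
    and agree: "M!q = N!q" "M!b = N!b" and as: "\<forall>i. q < i \<and> i < b \<longrightarrow> asc M i"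
  shows "w (labs w M ! q) \<le> w (labs w N ! q)"
proof -
  let ?mu = "labs w N ! q"
  have q: "q < n" using qb by simp
  have muA: "?mu \<in> atoms" using labs_atom[OF N q] .
  have "?mu \<le> N!Suc q" using labs_le[OF N q] .
  moreover have "N!Suc q \<le> N!b" using M_le[OF N, of "Suc q" b] qb by simp
  ultimately have mub: "?mu \<le> M!b" using agree(2) order_trans by metis
  have muq: "\<not> ?mu \<le> M!q" using labs_nle[OF N q] agree(1) by simp
  obtain r where r: "q \<le> r" "r < q + (b - q)" "?mu \<le> M!Suc r" "\<not> ?mu \<le> M!r"
    using first_entry[OF M muq, of "b - q" b] mub qb by auto
  have "w (labs w M ! r) \<le> w ?mu" using labs_min[OF M _ muA r(3) r(4)] r qb by simp
  moreover have "w (labs w M ! q) \<le> w (labs w M ! r)" using asc_chain[OF M as r(1)] r qb by simp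
  ultimately show ?thesis by simp
qed

end


lemma past_iffD: "G \<in> past Fs j \<Longrightarrow> G \<subseteq> Fs!j \<and> (\<exists>i<j. G \<subseteq> Fs!i)"
  unfolding past_def by auto

lemma past_iffI: "G \<subseteq> Fs!j \<and> (\<exists>i<j. G \<subseteq> Fs!i) \<Longrightarrow> G \<in> past Fs j"
  unfolding past_def by auto

lemma mS_sub: "\<gamma> \<in> maxchainsS S \<Longrightarrow> \<gamma> \<subseteq> PS S"
  unfolding maxchainsS_def by simp

lemma mS_max: "\<gamma> \<in> maxchainsS S \<Longrightarrow> D \<subseteq> PS S \<Longrightarrow> Complete_Partial_Order.chain (\<le>) D \<Longrightarrow> \<gamma> \<subseteq> D \<Longrightarrow> D = \<gamma>"
  unfolding maxchainsS_def by simp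


context geoS begin

lemma ff:
  assumes "\<gamma> \<in> maxchainsS S"
  shows "maxchain (ffirst w \<gamma>) \<and> (\<gamma>::'a set) = set (ffirst w \<gamma>) \<inter> PS S \<and>
    (\<forall>M'. maxchain M' \<and> \<gamma> \<subseteq> set M' \<longrightarrow>
        labs w (ffirst w \<gamma>) = labs w M' \<or> lexless w (labs w (ffirst w \<gamma>)) (labs w M'))"
proof -
  obtain M0 where "maxchain M0" "\<gamma> \<subseteq> set M0" using mS_maxchain[OF assms] by blast
  from ffirst_prop[OF this] have h: "maxchain (ffirst w \<gamma>)" "\<gamma> \<subseteq> set (ffirst w \<gamma>)"
    "\<forall>M'. maxchain M' \<and> \<gamma> \<subseteq> set M' \<longrightarrow>
        labs w (ffirst w \<gamma>) = labs w M' \<or> lexless w (labs w (ffirst w \<gamma>)) (labs w M')" by auto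
  have "\<gamma> = set (ffirst w \<gamma>) \<inter> PS S" using mS_eq[OF assms h(1,2)] .
  thus ?thesis using h by blast
qed

lemma in_gamma: "\<gamma> \<in> maxchainsS S \<Longrightarrow> maxchain M \<Longrightarrow> (\<gamma>::'a set) = set M \<inter> PS S \<Longrightarrow> x \<in> \<gamma> \<longleftrightarrow> (\<exists>p\<in>S. x = M!p)"
  using setM_PS by blast

lemma M_inj_idx: "maxchain (M::'a list) \<Longrightarrow> i \<le> n \<Longrightarrow> j \<le> n \<Longrightarrow> M!i = M!j \<Longrightarrow> i = j"
  using maxchain_rnk[of M i] maxchain_rnk[of M j] len_n[of M] by (metis le_imp_less_Suc)

lemma S_range: "p \<in> S \<Longrightarrow> 0 < p \<and> p < n"
  using Ssub by auto

lemma ffirst_asc: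
  assumes g: "\<gamma> \<in> maxchainsS S" and p: "0 < p" "p < n" "p \<notin> S"
  shows "asc (ffirst w (\<gamma>::'a set)) p"
proof (rule ccontr)
  let ?M = "ffirst w \<gamma>"
  assume na: "\<not> asc ?M p"
  have h: "maxchain ?M" "\<gamma> = set ?M \<inter> PS S" using ff[OF g] by auto
  obtain x' where x': "maxchain (?M[p := x'])" "lexless w (labs w (?M[p := x'])) (labs w ?M)"
    using swap[OF h(1) p(1,2) na] by blast
  have "\<gamma> \<subseteq> set (?M[p := x'])"
  proof
    fix y assume "y \<in> \<gamma>"
    then obtain r where r: "r \<in> S" "y = ?M!r" using in_gamma[OF g h] by blast
    have "r \<noteq> p" using r p by auto
    moreover have "r < length ?M" using len_n[OF h(1)] S_range[OF r(1)] by simp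
    ultimately have "?M[p := x'] ! r = y" using r by simp
    moreover have "r < length (?M[p := x'])" using \<open>r < length ?M\<close> by simp
    ultimately show "y \<in> set (?M[p := x'])" using nth_mem by metis
  qed
  hence "labs w ?M = labs w (?M[p := x']) \<or> lexless w (labs w ?M) (labs w (?M[p := x']))"
    using ff[OF g] x'(1) by blast
  thus False using x'(2) lexless_irrefl lexless_asym by metis
qed

lemma first_diff:
  assumes "length xs = n" "length ys = n" "xs \<noteq> ys"
  shows "\<exists>q<n. xs!q \<noteq> ys!q \<and> (\<forall>i<q. xs!i = ys!i)"
proof -
  have ex: "\<exists>q. q < n \<and> xs!q \<noteq> ys!q" using assms nth_equalityI by metis
  define q where "q = (LEAST q. q < n \<and> xs!q \<noteq> ys!q)"
  have "q < n \<and> xs!q \<noteq> ys!q" using LeastI_ex[OF ex] q_def by simp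
  moreover have "\<forall>i<q. xs!i = ys!i"
  proof (intro allI impI)
    fix i assume "i < q"
    hence "\<not> (i < n \<and> xs!i \<noteq> ys!i)" using not_less_Least q_def by blast
    thus "xs!i = ys!i" using \<open>i < q\<close> \<open>q < n \<and> xs!q \<noteq> ys!q\<close> by simp
  qed
  ultimately show ?thesis by blast
qed

lemma hom_iff:
  fixes Fs :: "'a set list"
  assumes dist: "distinct Fs" and setFs: "set Fs = maxchainsS S"
    and linext: "\<forall>i j. i < j \<and> j < length Fs \<longrightarrow>
         \<not> lexless w (labs w (ffirst w (Fs ! j))) (labs w (ffirst w (Fs ! i)))"
    and j: "j < length Fs"
  shows "homology_facet Fs j \<longleftrightarrow> (\<forall>p\<in>S. \<not> asc (ffirst w (Fs!j)) p)"
proof -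
  let ?g = "Fs!j"
  let ?M = "ffirst w ?g"
  have g: "?g \<in> maxchainsS S" using j setFs nth_mem by blast
  have M: "maxchain ?M" "?g = set ?M \<inter> PS S" using ff[OF g] by auto
  have Mmin: "\<forall>M'. maxchain M' \<and> ?g \<subseteq> set M' \<longrightarrow>
        labs w ?M = labs w M' \<or> lexless w (labs w ?M) (labs w M')" using ff[OF g] by blast
  have Fsi: "\<And>i. i < length Fs \<Longrightarrow> Fs!i \<in> maxchainsS S" using setFs nth_mem by blast
  have idx: "\<And>i. i < length Fs \<Longrightarrow> Fs!i = Fs!j \<Longrightarrow> i = j" using dist j nth_eq_iff_index_eq by blast
  show ?thesis
  proof
    assume hom: "homology_facet Fs j"
    show "\<forall>p\<in>S. \<not> asc ?M p"
    proof (intro ballI notI)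
      fix p assume pS: "p \<in> S" and as: "asc ?M p"
      have p: "0 < p" "p < n" using S_range[OF pS] by auto
      let ?x = "?M!p"
      have xg: "?x \<in> ?g" using in_gamma[OF g M(1) M(2)] pS by blast
      have "?g - {?x} \<subset> ?g" using xg by blast
      hence "?g - {?x} \<in> past Fs j" using hom unfolding homology_facet_def by blast
      then obtain i where i: "i < j" "?g - {?x} \<subseteq> Fs!i" using past_iffD by blast
      have il: "i < length Fs" using i j by simp
      let ?N = "ffirst w (Fs!i)"
      have N: "maxchain ?N" "Fs!i = set ?N \<inter> PS S" using ff[OF Fsi[OF il]] by auto
      have nl: "\<not> lexless w (labs w ?M) (labs w ?N)" using linext i(1) j by blast
      show False
      proof (cases "labs w ?M = labs w ?N")
        case True
        hence "?M = ?N" using labs_inj M(1) N(1) by blast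
        hence "Fs!i = Fs!j" using M(2) N(2) by simp
        thus False using idx[OF il] i(1) by simp
      next
        case False
        obtain q where q: "q < n" "labs w ?M ! q \<noteq> labs w ?N ! q" "\<forall>i<q. labs w ?M ! i = labs w ?N ! i"
          using first_diff[OF labs_len_n[OF M(1)] labs_len_n[OF N(1)] False] by blast
        have Mq: "?M!q = ?N!q"
          using maxchain_prefix[OF M(1) N(1) q(3)] len_n[OF M(1)] len_n[OF N(1)] q(1) by simp
        let ?P = "\<lambda>r. q < r \<and> (r \<in> S - {p} \<or> r = n)"
        define b where "b = (LEAST r. ?P r)"
        have Pn: "?P n" using q(1) by simp
        have Pb: "?P b" using LeastI[of ?P n, OF Pn] b_def by simp
        have bn: "b \<le> n" using Least_le[of ?P n, OF Pn] b_def by simp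
        have notP: "\<And>r. r < b \<Longrightarrow> \<not> ?P r" using not_less_Least b_def by blast
        have Mb: "?M!b = ?N!b"
        proof (cases "b = n")
          case True then show ?thesis using M_top[OF M(1)] M_top[OF N(1)] by simp
        next
          case False
          hence bS: "b \<in> S" "b \<noteq> p" using Pb by auto
          have "?M!b \<in> ?g" using in_gamma[OF g M(1) M(2)] bS by blast
          moreover have "?M!b \<noteq> ?x" using M_inj_idx[OF M(1) bn, of p] bS p by auto
          ultimately have "?M!b \<in> Fs!i" using i(2) by blast
          then obtain r where r: "r \<in> S" "?M!b = ?N!r" using in_gamma[OF Fsi[OF il] N(1) N(2)] by blast
          have "rnk (?M!b) = b" using maxchain_rnk[OF M(1)] bn len_n[OF M(1)] by simp
          moreover have "rnk (?N!r) = r" using maxchain_rnk[OF N(1)] S_range[OF r(1)] len_n[OF N(1)] by simp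
          ultimately have "r = b" using r(2) by simp
          thus ?thesis using r(2) by simp
        qed
        have ascs: "\<forall>i. q < i \<and> i < b \<longrightarrow> asc ?M i"
        proof (intro allI impI)
          fix i assume qi: "q < i \<and> i < b"
          show "asc ?M i"
          proof (cases "i = p")
            case True then show ?thesis using as by simp
          next
            case False
            have "\<not> ?P i" using notP qi by simp
            hence "i \<notin> S" using qi False by auto
            moreover have "i < n" using qi bn by simp
            ultimately show ?thesis using ffirst_asc[OF g _ _ ] qi by simp
          qed
        qed
        have "w (labs w ?M ! q) \<le> w (labs w ?N ! q)"
          using EL[OF M(1) N(1) _ bn Mq Mb ascs] Pb by simp
        moreover have "w (labs w ?M ! q) \<noteq> w (labs w ?N ! q)"
          using w_eq_atoms[OF labs_atom[OF M(1) q(1)] labs_atom[OF N(1) q(1)]] q(2) by blast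
        ultimately have "w (labs w ?M ! q) < w (labs w ?N ! q)" by simp
        moreover have "\<forall>i<q. w (labs w ?M ! i) = w (labs w ?N ! i)" using q(3) by simp
        ultimately have "lexless w (labs w ?M) (labs w ?N)"
          using lexless_at[of "labs w ?M" "labs w ?N" q w] labs_len_n[OF M(1)] labs_len_n[OF N(1)] q(1) by simp
        thus False using nl by simp
      qed
    qed
  next
    assume nasc: "\<forall>p\<in>S. \<not> asc ?M p"
    have key: "\<And>x. x \<in> ?g \<Longrightarrow> \<exists>i<j. ?g - {x} \<subseteq> Fs!i"
    proof -
      fix x assume xg: "x \<in> ?g"
      then obtain p where pS: "p \<in> S" and xp: "x = ?M!p" using in_gamma[OF g M(1) M(2)] by blast
      have p: "0 < p" "p < n" using S_range[OF pS] by auto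
      obtain x' where x': "maxchain (?M[p := x'])" "x' \<noteq> ?M!p" "lexless w (labs w (?M[p := x'])) (labs w ?M)"
        using swap[OF M(1) p] nasc pS by blast
      let ?M' = "?M[p := x']"
      have pl: "p < length ?M" using len_n[OF M(1)] p by simp
      have "set ?M' \<inter> PS S \<in> set Fs" using mS_of[OF x'(1)] setFs by simp
      then obtain i where il: "i < length Fs" and gi: "Fs!i = set ?M' \<inter> PS S" by (metis in_set_conv_nth)
      have sub: "?g - {x} \<subseteq> Fs!i"
      proof
        fix y assume y: "y \<in> ?g - {x}"
        then obtain r where r: "r \<in> S" "y = ?M!r" using in_gamma[OF g M(1) M(2)] by blast
        have "r \<noteq> p" using r y xp by auto
        hence "?M'!r = y" using r by simp
        thus "y \<in> Fs!i" using gi setM_PS[OF x'(1)] r(1) by blast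
      qed
      have ij: "i \<noteq> j"
      proof
        assume "i = j"
        have "?M'!p = x'" using pl by simp
        hence "x' \<in> set ?M' \<inter> PS S" using setM_PS[OF x'(1)] pS by metis
        hence "x' \<in> Fs!i" by (subst gi)
        hence "x' \<in> ?g" using \<open>i = j\<close> by (simp only:)
        then obtain r where r: "r \<in> S" "x' = ?M!r" using in_gamma[OF g M(1) M(2)] by blast
        have "rnk x' = p" using maxchain_rnk[OF x'(1), of p] pl \<open>?M'!p = x'\<close> by simp
        moreover have "rnk (?M!r) = r" using maxchain_rnk[OF M(1)] S_range[OF r(1)] len_n[OF M(1)] by simp
        ultimately have "r = p" using r(2) by simp
        thus False using r(2) x'(2) by simp
      qed
      have "\<not> j < i"
      proof
        assume ji: "j < i"
        hence nl: "\<not> lexless w (labs w (ffirst w (Fs!i))) (labs w ?M)" using linext il by blast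
        have "labs w (ffirst w (Fs!i)) = labs w ?M' \<or> lexless w (labs w (ffirst w (Fs!i))) (labs w ?M')"
          using ff[OF Fsi[OF il]] x'(1) gi by blast
        hence "lexless w (labs w (ffirst w (Fs!i))) (labs w ?M)" using x'(3) lexless_trans by metis
        thus False using nl by simp
      qed
      hence "i < j" using ij by simp
      thus "\<exists>i<j. ?g - {x} \<subseteq> Fs!i" using sub by blast
    qed
    show "homology_facet Fs j"
      unfolding homology_facet_def
    proof (rule set_eqI)
      fix G
      show "G \<in> past Fs j \<longleftrightarrow> G \<in> {G. G \<subset> ?g}"
      proof
        assume "G \<in> past Fs j"
        hence "G \<subseteq> ?g \<and> (\<exists>i<j. G \<subseteq> Fs!i)" by (rule past_iffD)
        then obtain i where G: "G \<subseteq> ?g" "i < j" "G \<subseteq> Fs!i" by auto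
        have il: "i < length Fs" using G(2) j by simp
        have "G \<noteq> ?g"
        proof
          assume "G = ?g"
          hence "?g \<subseteq> Fs!i" using G(3) by simp
          from mS_max[OF g mS_sub[OF Fsi[OF il]] mS_chain[OF Fsi[OF il]] this]
          have "Fs!i = ?g" .
          thus False using idx[OF il] G(2) by simp
        qed
        hence "G \<subset> ?g" using G(1) by (simp add: psubset_eq)
        thus "G \<in> {G. G \<subset> ?g}" by simp
      next
        assume "G \<in> {G. G \<subset> ?g}"
        hence G: "G \<subset> ?g" by simp
        then obtain x where x: "x \<in> ?g" "x \<notin> G" by (metis psubset_imp_ex_mem Diff_iff)
        obtain i where i: "i < j" "?g - {x} \<subseteq> Fs!i" using key[OF x(1)] by auto
        have "G \<subseteq> Fs!i" using G x(2) i(2) by auto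
        hence "G \<subseteq> ?g \<and> (\<exists>i<j. G \<subseteq> Fs!i)" using G i(1) by auto
        thus "G \<in> past Fs j" by (rule past_iffI)
      qed
    qed
  qed
qed

end


lemma upt0: "[0..<Suc m] = 0 # map Suc [0..<m]"
proof -
  have "[0..<Suc m] = 0 # [Suc 0..<Suc m]" by (rule upt_conv_Cons) simp
  thus ?thesis by (simp only: map_Suc_upt)
qed

lemma concat_blocks:
  "sum_list rs = length xs \<Longrightarrow>
   concat (map (\<lambda>i. map (\<lambda>t. xs ! (sum_list (take i rs) + t)) [0..<rs ! i]) [0..<length rs]) = xs"
proof (induction rs arbitrary: xs)
  case Nil then show ?case by simp
next
  case (Cons r rs)
  have up: "[0..<length (r # rs)] = 0 # map Suc [0..<length rs]"
    by (simp only: length_Cons upt0)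
  have b0: "map (\<lambda>t. xs ! (0 + t)) [0..<r] = take r xs"
    using Cons.prems by (intro nth_equalityI) auto
  have "sum_list rs = length (drop r xs)" using Cons.prems by simp
  note IH = Cons.IH[OF this]
  have rest: "concat (map (\<lambda>i. map (\<lambda>t. xs ! (sum_list (take (Suc i) (r # rs)) + t)) [0..<(r # rs) ! Suc i]) [0..<length rs])
      = drop r xs"
  proof -
    have "\<And>i t. i < length rs \<Longrightarrow> xs ! (sum_list (take (Suc i) (r # rs)) + t) = drop r xs ! (sum_list (take i rs) + t)"
    proof -
      fix i t assume "i < length rs"
      have "r \<le> length xs" using Cons.prems by simp
      thus "xs ! (sum_list (take (Suc i) (r # rs)) + t) = drop r xs ! (sum_list (take i rs) + t)"
        by (simp add: add.assoc)
    qed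
    hence "map (\<lambda>i. map (\<lambda>t. xs ! (sum_list (take (Suc i) (r # rs)) + t)) [0..<(r # rs) ! Suc i]) [0..<length rs]
        = map (\<lambda>i. map (\<lambda>t. drop r xs ! (sum_list (take i rs) + t)) [0..<rs ! i]) [0..<length rs]"
      by (intro map_cong) auto
    thus ?thesis using IH by (simp only:)
  qed
  have "concat (map (\<lambda>i. map (\<lambda>t. xs ! (sum_list (take i (r # rs)) + t)) [0..<(r # rs) ! i]) [0..<length (r # rs)])
     = take r xs @ concat (map (\<lambda>i. map (\<lambda>t. xs ! (sum_list (take (Suc i) (r # rs)) + t)) [0..<(r # rs) ! Suc i]) [0..<length rs])"
    using b0 unfolding up by (simp add: comp_def)
  also have "\<dots> = xs" using rest by simp
  finally show ?case .
qed

context geoS begin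

definition sl :: "nat list" where "sl = sorted_list_of_set S"
definition sb :: "nat \<Rightarrow> nat" where "sb i = (0 # sl @ [n]) ! i"
abbreviation "k \<equiv> length sl"

lemma finS: "finite S" using Ssub finite_subset by blast

lemma sl_set: "set sl = S" using finS by (simp add: sl_def)

lemma sl_sorted: "sorted_wrt (<) sl"
  unfolding sl_def strict_sorted_iff using finS by simp

lemma sl_range: "i < k \<Longrightarrow> 0 < sl ! i \<and> sl ! i < n"
  using sl_set Ssub nth_mem[of i sl] by auto

lemma sb0: "sb 0 = 0" by (simp add: sb_def)
lemma sbk: "sb (Suc k) = n" by (simp add: sb_def nth_append)
lemma sbi: "i < k \<Longrightarrow> sb (Suc i) = sl ! i" by (simp add: sb_def nth_append)

lemma sb_mono: "0 < n \<Longrightarrow> i < j \<Longrightarrow> j \<le> Suc k \<Longrightarrow> sb i < sb j"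
proof -
  assume npos: "0 < n" and ij: "i < j" "j \<le> Suc k"
  show "sb i < sb j"
  proof (cases i)
    case 0
    then obtain j' where j': "j = Suc j'" using ij by (cases j) auto
    show ?thesis
    proof (cases "j' < k")
      case True then show ?thesis using 0 j' sbi sl_range sb0 by simp
    next
      case False then have "j' = k" using j' ij by simp
      then show ?thesis using 0 j' sbk sb0 npos by simp
    qed
  next
    case (Suc i')
    then obtain j' where j': "j = Suc j'" using ij by (cases j) auto
    have i'k: "i' < k" using Suc j' ij by simp
    show ?thesis
    proof (cases "j' < k")
      case True then show ?thesis using Suc j' ij sbi sl_sorted sorted_wrt_nth_less[OF sl_sorted, of i' j'] i'k by simp
    next
      case False then have "j' = k" using j' ij by simp
      then show ?thesis using Suc j' sbk sbi[OF i'k] sl_range[OF i'k] by simp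
    qed
  qed
qed

lemma sb_mono_le: "i \<le> j \<Longrightarrow> j \<le> Suc k \<Longrightarrow> sb i \<le> sb j"
proof -
  assume ij: "i \<le> j" "j \<le> Suc k"
  show "sb i \<le> sb j"
  proof (cases "0 < n")
    case True then show ?thesis using sb_mono[of i j] ij by (cases "i = j") auto
  next
    case False
    hence "S = {}" using Ssub by auto
    hence "k = 0" using sl_set by simp
    thus ?thesis using ij False sb0 sbk by (cases i; cases j) auto
  qed
qed

lemma sb_ge: "0 < n \<Longrightarrow> i \<le> Suc k \<Longrightarrow> i \<le> sb i"
proof (induction i)
  case 0 then show ?case by simp
next
  case (Suc i) then show ?case using sb_mono[of i "Suc i"] by simp
qed

definition rs :: "nat list" where "rs = ribrows n S"

lemma rs_len: "length rs = Suc k"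
  by (simp add: rs_def ribrows_def sl_def[symmetric] Let_def)

lemma rs_nth: "i \<le> k \<Longrightarrow> rs ! i = sb (Suc i) - sb i"
proof -
  assume i: "i \<le> k"
  have "rs ! i = (sl @ [n]) ! i - (0 # sl) ! i"
    using i by (simp add: rs_def ribrows_def sl_def[symmetric] Let_def)
  moreover have "(sl @ [n]) ! i = sb (Suc i)" by (simp add: sb_def)
  moreover have "(0 # sl) ! i = sb i" using i by (cases i) (auto simp: sb_def nth_append)
  ultimately show ?thesis by simp
qed

lemma rs_pos: "0 < n \<Longrightarrow> i \<le> k \<Longrightarrow> 0 < rs ! i"
  using rs_nth sb_mono[of i "Suc i"] by simp

lemma rs_sum_take: "i \<le> Suc k \<Longrightarrow> sum_list (take i rs) = sb i"
proof (induction i)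
  case 0 then show ?case by (simp add: sb0)
next
  case (Suc i)
  have "take (Suc i) rs = take i rs @ [rs ! i]" using Suc.prems rs_len by (simp add: take_Suc_conv_app_nth)
  hence "sum_list (take (Suc i) rs) = sb i + rs ! i" using Suc by simp
  also have "\<dots> = sb (Suc i)" using rs_nth[of i] Suc.prems sb_mono_le[of i "Suc i"] by simp
  finally show ?case .
qed

lemma rs_sum: "sum_list rs = n"
  using rs_sum_take[of "Suc k"] rs_len sbk by simp

lemma rs_start: "0 < n \<Longrightarrow> i \<le> Suc k \<Longrightarrow> rib_start rs i = sb i - i"
proof (induction i)
  case 0 then show ?case by (simp add: rib_start_def sb0)
next
  case (Suc i)
  have "rib_start rs (Suc i) = rib_start rs i + (rs ! i - 1)" by (simp add: rib_start_def)
  also have "\<dots> = sb i - i + (sb (Suc i) - sb i - 1)" using Suc rs_nth[of i] by simp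
  also have "\<dots> = sb (Suc i) - Suc i" using sb_ge[of i] sb_mono[of i "Suc i"] Suc.prems by arith
  finally show ?case .
qed

lemma box_iff: "0 < n \<Longrightarrow> (i, c) \<in> rib_boxes rs \<longleftrightarrow> i \<le> k \<and> sb i - i \<le> c \<and> c < sb (Suc i) - i"
proof
  assume npos: "0 < n" and "(i, c) \<in> rib_boxes rs"
  then obtain t where t: "i < length rs" "t < rs ! i" "c = rib_start rs i + t" by (auto simp: rib_boxes_def)
  have ik: "i \<le> k" using t(1) rs_len by simp
  have "c = sb i - i + t" using t(3) rs_start[OF npos, of i] ik by simp
  moreover have "t < sb (Suc i) - sb i" using t(2) rs_nth[OF ik] by simp
  moreover have "i \<le> sb i" using sb_ge[OF npos, of i] ik by simp
  ultimately show "i \<le> k \<and> sb i - i \<le> c \<and> c < sb (Suc i) - i" using ik by arith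
next
  assume npos: "0 < n" and h: "i \<le> k \<and> sb i - i \<le> c \<and> c < sb (Suc i) - i"
  have "i \<le> sb i" using sb_ge[OF npos, of i] h by simp
  have "sb i < sb (Suc i)" using sb_mono[OF npos, of i "Suc i"] h by simp
  let ?t = "c - (sb i - i)"
  have "c = rib_start rs i + ?t" using rs_start[of i] h npos by simp
  moreover have "?t < rs ! i" using rs_nth[of i] h \<open>i \<le> sb i\<close> by arith
  moreover have "i < length rs" using rs_len h by simp
  ultimately show "(i, c) \<in> rib_boxes rs" unfolding rib_boxes_def by blast
qed

lemma frib_val: "0 < n \<Longrightarrow> i \<le> k \<Longrightarrow> sb i - i \<le> c \<Longrightarrow> frib w rs M (i, c) = labs w M ! (c + i)"
proof -
  assume npos: "0 < n" and h: "i \<le> k" "sb i - i \<le> c"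
  have "i \<le> sb i" using sb_ge[of i] h npos by simp
  have "frib w rs M (i, c) = labs w M ! (sb i + (c - (sb i - i)))"
    unfolding frib_def using rs_sum_take[of i] rs_start[of i] h npos by simp
  moreover have "sb i + (c - (sb i - i)) = c + i" using h \<open>i \<le> sb i\<close> by simp
  ultimately show ?thesis by simp
qed

lemma inS_sb: "p \<in> S \<Longrightarrow> \<exists>i<k. p = sb (Suc i)"
  using sl_set sbi by (metis in_set_conv_nth)

lemma between_notS: "0 < n \<Longrightarrow> i \<le> k \<Longrightarrow> sb i < m \<Longrightarrow> m < sb (Suc i) \<Longrightarrow> m \<notin> S"
proof
  assume npos: "0 < n" and h: "i \<le> k" "sb i < m" "m < sb (Suc i)" "m \<in> S"
  obtain j where j: "j < k" "m = sb (Suc j)" using inS_sb[OF h(4)] by blast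
  have "i < Suc j"
  proof (rule ccontr)
    assume "\<not> i < Suc j"
    hence "Suc j < i \<or> Suc j = i" by auto
    thus False using sb_mono[of "Suc j" i] h j npos by auto
  qed
  moreover have "Suc j < Suc i"
  proof (rule ccontr)
    assume "\<not> Suc j < Suc i"
    hence "Suc i < Suc j \<or> Suc j = Suc i" by auto
    thus False using sb_mono[of "Suc i" "Suc j"] h j npos by auto
  qed
  ultimately show False by simp
qed

lemma std_imp:
  assumes M: "maxchain (M::'a list)" and st: "standard w rs (frib w rs M)"
  shows "\<forall>p\<in>S. \<not> asc M p"
proof (intro ballI notI)
  fix p assume pS: "p \<in> S" and as: "asc M p"
  have npos: "0 < n" using S_range[OF pS] by simp
  obtain i where i: "i < k" "p = sb (Suc i)" using inS_sb[OF pS] by blast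
  let ?c = "sb (Suc i) - Suc i"
  have m1: "sb i < sb (Suc i)" using sb_mono[of i "Suc i"] i npos by simp
  have m2: "sb (Suc i) < sb (Suc (Suc i))" using sb_mono[of "Suc i" "Suc (Suc i)"] i npos by simp
  have g1: "Suc i \<le> sb (Suc i)" using sb_ge[of "Suc i"] i npos by simp
  have "i \<le> k \<and> sb i - i \<le> ?c \<and> ?c < sb (Suc i) - i" using i m1 g1 by arith
  hence b1: "(i, ?c) \<in> rib_boxes rs" using box_iff[OF npos] by blast
  have "Suc i \<le> k \<and> sb (Suc i) - Suc i \<le> ?c \<and> ?c < sb (Suc (Suc i)) - Suc i" using i m2 g1 by arith
  hence b2: "(Suc i, ?c) \<in> rib_boxes rs" using box_iff[OF npos] by blast
  have "w (frib w rs M (Suc i, ?c)) < w (frib w rs M (i, ?c))"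
    using st b1 b2 unfolding standard_def by blast
  moreover have "frib w rs M (Suc i, ?c) = labs w M ! p" using frib_val[OF npos, of "Suc i" ?c M] i g1 by simp
  moreover have "?c + i = p - 1" using i g1 by simp
  moreover have "sb i - i \<le> ?c" using m1 g1 by arith
  hence "frib w rs M (i, ?c) = labs w M ! (?c + i)" using frib_val[OF npos, of i ?c M] i by simp
  ultimately show False using as unfolding asc_def by simp
qed

lemma rs_n0: "n = 0 \<Longrightarrow> rib_boxes rs = {}"
proof -
  assume n0: "n = 0"
  hence "S = {}" using Ssub by auto
  hence "sl = []" using sl_set by simp
  moreover have "rs = map2 (-) (sl @ [n]) (0 # sl)" by (simp add: rs_def ribrows_def sl_def Let_def)
  ultimately have "rs = [0]" using n0 by simp
  thus ?thesis by (simp add: rib_boxes_def)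
qed

lemma imp_std:
  assumes M: "maxchain (M::'a list)" and D: "\<forall>p. 0 < p \<and> p < n \<longrightarrow> (asc M p \<longleftrightarrow> p \<notin> S)"
  shows "standard w rs (frib w rs M)"
proof (cases "n = 0")
  case True then show ?thesis using rs_n0 by (simp add: standard_def)
next
  case False
  hence npos: "0 < n" by simp
  show ?thesis
  unfolding standard_def
  proof (intro conjI allI impI)
    fix i c assume h: "(i, c) \<in> rib_boxes rs \<and> (i, Suc c) \<in> rib_boxes rs"
    hence b: "i \<le> k" "sb i - i \<le> c" "Suc c < sb (Suc i) - i" using box_iff[OF npos] by auto
    have ge: "i \<le> sb i" using sb_ge[OF npos, of i] b by simp
    have sk: "sb (Suc i) \<le> n" using sb_mono_le[of "Suc i" "Suc k"] sbk b by simp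
    let ?m = "Suc (c + i)"
    have "sb i < ?m" "?m < sb (Suc i)" using b ge by arith+
    hence "?m \<notin> S" using between_notS[OF npos b(1)] by blast
    moreover have "0 < ?m" "?m < n" using \<open>?m < sb (Suc i)\<close> sk by auto
    ultimately have "asc M ?m" using D by blast
    moreover have "frib w rs M (i, c) = labs w M ! (c + i)" using frib_val[OF npos] b by simp
    moreover have "frib w rs M (i, Suc c) = labs w M ! (Suc (c + i))" using frib_val[OF npos] b by simp
    ultimately show "w (frib w rs M (i, c)) < w (frib w rs M (i, Suc c))" unfolding asc_def by simp
  next
    fix i c assume h: "(i, c) \<in> rib_boxes rs \<and> (Suc i, c) \<in> rib_boxes rs"
    hence b: "i \<le> k" "sb i - i \<le> c" "c < sb (Suc i) - i" "Suc i \<le> k" "sb (Suc i) - Suc i \<le> c"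
      using box_iff[OF npos] by auto
    have ge: "Suc i \<le> sb (Suc i)" using sb_ge[OF npos, of "Suc i"] b by simp
    have c: "c = sb (Suc i) - Suc i" using b ge by arith
    let ?p = "sb (Suc i)"
    have pS: "?p \<in> S" using sbi[of i] b(4) sl_set nth_mem[of i sl] by simp
    have p: "0 < ?p" "?p < n" using S_range[OF pS] by auto
    have "\<not> asc M ?p" using D p pS by blast
    hence "w (labs w M ! ?p) < w (labs w M ! (?p - 1))" using not_asc[OF M p] by simp
    moreover have "frib w rs M (Suc i, c) = labs w M ! ?p" using frib_val[OF npos, of "Suc i" c M] b c ge by simp
    moreover have "c + i = ?p - 1" using c ge by simp
    hence "frib w rs M (i, c) = labs w M ! (?p - 1)" using frib_val[OF npos, of i c M] b by simp
    ultimately show "w (frib w rs M (Suc i, c)) < w (frib w rs M (i, c))" by simp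
  qed
qed

lemma reading_eq: "maxchain (M::'a list) \<Longrightarrow> reading_word rs (frib w rs M) = labs w M"
proof -
  assume M: "maxchain M"
  have "reading_word rs (frib w rs M) =
     concat (map (\<lambda>i. map (\<lambda>t. labs w M ! (sum_list (take i rs) + t)) [0..<rs ! i]) [0..<length rs])"
    unfolding reading_word_def frib_def by simp
  also have "\<dots> = labs w M" using concat_blocks[of rs "labs w M"] rs_sum labs_len_n[OF M] by simp
  finally show ?thesis .
qed

lemma Sup_take: "maxchain (M::'a list) \<Longrightarrow> j \<le> n \<Longrightarrow> Sup (set (take j (labs w M))) = M!j"
proof (induction j)
  case 0 then show ?case using M_bot by simp
next
  case (Suc j)
  have "take (Suc j) (labs w M) = take j (labs w M) @ [labs w M ! j]"
    using Suc.prems labs_len_n by (simp add: take_Suc_conv_app_nth)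
  hence "Sup (set (take (Suc j) (labs w M))) = sup (labs w M ! j) (M!j)" using Suc by simp
  also have "\<dots> = M!Suc j" using labs_step[OF Suc.prems(1)] len_n[OF Suc.prems(1)] Suc.prems(2)
    by (simp add: sup_commute)
  finally show ?case .
qed

lemma labs_distinct: "maxchain (M::'a list) \<Longrightarrow> distinct (labs w M)"
  unfolding distinct_conv_nth
proof (intro allI impI)
  fix i j assume h: "maxchain M" "i < length (labs w M)" "j < length (labs w M)" "i \<noteq> j"
  have gen: "\<And>a b. a < b \<Longrightarrow> b < n \<Longrightarrow> labs w M ! a \<noteq> labs w M ! b"
  proof
    fix a b assume ab: "a < b" "b < n" "labs w M ! a = labs w M ! b"
    have "labs w M ! a \<le> M!Suc a" using labs_le[OF h(1), of a] ab(1,2) by simp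
    moreover have "M!Suc a \<le> M!b" using M_le[OF h(1), of "Suc a" b] ab by simp
    ultimately have "labs w M ! b \<le> M!b" using ab(3) order_trans by metis
    thus False using labs_nle[OF h(1) ab(2)] by simp
  qed
  show "labs w M ! i \<noteq> labs w M ! j"
    using h labs_len_n[OF h(1)] gen[of i j] gen[of j i] by (cases "i < j") auto
qed

lemma nbc_M: "maxchain (M::'a list) \<Longrightarrow> nbc_plus w n (labs w M)"
  unfolding nbc_plus_def
proof (intro conjI allI impI)
  assume M: "maxchain M"
  show "length (labs w M) = n" using labs_len_n[OF M] .
  show dst: "distinct (labs w M)" using labs_distinct[OF M] .
  have top: "Sup (set (labs w M)) = top" using Sup_take[OF M, of n] M_top[OF M] labs_len_n[OF M] by simp
  show "nbc_indep w (set (labs w M))"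
    unfolding nbc_indep_def
  proof (intro conjI ballI)
    show "set (labs w M) \<subseteq> atoms" using maxchain_labs_atoms[OF M] .
    show "rnk (Sup (set (labs w M))) = card (set (labs w M))"
      using top rank distinct_card[OF dst] labs_len_n[OF M] by simp
    fix a assume a: "a \<in> atoms_below (Sup (set (labs w M))) - set (labs w M)"
    hence aA: "a \<in> atoms" "a \<le> M!(0 + n)" "a \<notin> set (labs w M)" using top M_top[OF M] by (auto simp: atoms_below_def)
    have "\<not> a \<le> M!0" using atom_not_bot[OF aA(1)] M_bot[OF M] by simp
    then obtain r where r: "0 \<le> r" "r < 0 + n" "a \<le> M!Suc r" "\<not> a \<le> M!r"
      using first_entry[OF M, of a 0 n n] aA(2) by auto
    have "w (labs w M ! r) \<le> w a" using labs_min[OF M _ aA(1) r(3) r(4)] r by simp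
    moreover have "labs w M ! r \<noteq> a" using aA(3) r labs_len_n[OF M] nth_mem[of r "labs w M"] by auto
    hence "w (labs w M ! r) \<noteq> w a" using w_eq_atoms[OF labs_atom[OF M] aA(1)] r by auto
    ultimately have "w (labs w M ! r) < w a" by simp
    moreover have "labs w M ! r \<in> set (labs w M)" using r labs_len_n[OF M] by simp
    ultimately show "\<exists>b\<in>set (labs w M). w b < w a" by blast
  qed
next
  fix j assume M: "maxchain M" and j: "j < n"
  have "Sup (set (take (Suc j) (labs w M))) = M!Suc j" using Sup_take[OF M, of "Suc j"] j by simp
  moreover have "Sup (set (take j (labs w M))) = M!j" using Sup_take[OF M, of j] j by simp
  ultimately show "labs w M ! j = amin w (atoms_below (Sup (set (take (Suc j) (labs w M)))) -
                                       atoms_below (Sup (set (take j (labs w M)))))"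
    using labs_nth_M[OF M j] by (simp add: lab_def)
qed

end


theorem proposition5p20:
  fixes w :: "'a::{finite,complete_lattice} \<Rightarrow> nat"
    and n :: nat and S :: "nat set" and Fs :: "'a set list"
  assumes geom: "geometric_lattice TYPE('a)"
    and rank: "rnk (top::'a) = n"
    and atom_order: "inj_on w atoms"
    and S: "S \<subseteq> {1..<n}"
    and facets: "distinct Fs" "set Fs = maxchainsS S"
    and linext: "\<forall>i j. i < j \<and> j < length Fs \<longrightarrow>
         \<not> lexless w (labs w (ffirst w (Fs ! j))) (labs w (ffirst w (Fs ! i)))"
    and shell: "is_shelling Fs"
  shows "\<forall>j < length Fs. homology_facet Fs j \<longleftrightarrow>
           (standard w (ribrows n S) (frib w (ribrows n S) (ffirst w (Fs ! j))) \<and>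
            nbc_plus w n (reading_word (ribrows n S) (frib w (ribrows n S) (ffirst w (Fs ! j)))))"
proof -
  interpret geoS w n S
    by (unfold_locales; (fact geom | fact atom_order | fact rank | fact S))
  show ?thesis
  proof (intro allI impI)
    fix j assume j: "j < length Fs"
    let ?g = "Fs!j"
    let ?M = "ffirst w ?g"
    have g: "?g \<in> maxchainsS S" using j facets(2) nth_mem by blast
    have M: "maxchain ?M" using ff[OF g] by blast
    have rr: "ribrows n S = rs" by (simp add: rs_def)
    have hom: "homology_facet Fs j \<longleftrightarrow> (\<forall>p\<in>S. \<not> asc ?M p)"
      using hom_iff[OF facets(1) facets(2) linext j] .
    have nbc: "nbc_plus w n (reading_word rs (frib w rs ?M))"
      using reading_eq[OF M] nbc_M[OF M] by simp
    have std: "standard w rs (frib w rs ?M) \<longleftrightarrow> (\<forall>p\<in>S. \<not> asc ?M p)"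
    proof
      assume "standard w rs (frib w rs ?M)"
      thus "\<forall>p\<in>S. \<not> asc ?M p" using std_imp[OF M] by blast
    next
      assume na: "\<forall>p\<in>S. \<not> asc ?M p"
      have "\<forall>p. 0 < p \<and> p < n \<longrightarrow> (asc ?M p \<longleftrightarrow> p \<notin> S)"
        using na ffirst_asc[OF g] by blast
      thus "standard w rs (frib w rs ?M)" using imp_std[OF M] by blast
    qed
    show "homology_facet Fs j \<longleftrightarrow>
           (standard w (ribrows n S) (frib w (ribrows n S) ?M) \<and>
            nbc_plus w n (reading_word (ribrows n S) (frib w (ribrows n S) ?M)))"
      unfolding rr using hom std nbc by blast
  qed
qed



end
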